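(* Let $\mathbf A$ be a finite nilpotent algebra with a Malcev term. Then $\mathrm{nuP}_{\mathbf A}\subseteq\mathsf{CC}^0$.
   Context: A finite algebra has finite universe and finitely many basic operations. An $n$-ary circuit over $\mathbf A$ is a DAG with one output node, sources labelled by variables or constants from $A$, gates labelled by basic operations; size is nodes plus edges. A NuDFA over $\mathbf A$ is $(\{t_n\}_{n\ge1},\iota,S)$ with $t_n$ an $n$-ary circuit, $\iota:\{0,1\}\to A$, $S\subseteq A$, accepting $b\in\{0,1\}^n$ iff $t_n(\iota(b_1),\dots,\iota(b_n))\in S$; polynomial size means size of $t_n$ polynomial in $n$; $\mathrm{nuP}_{\mathbf A}$ is the class of languages over $\{0,1\}$ accepted by polynomial-size NuDFAs over $\mathbf A$. A Malcev term is a ternary term $d$ with $d(x,y,y)=d(y,y,x)=x$; nilpotency is in the sense of commutator theory. $\mathsf{CC}^0$ is the class of languages recognized by families of polynomial-size constant-depth circuits built from $\mathrm{MOD}_m$ gates of unbounded fan-in for some fixed $m$, where a $\mathrm{MOD}_m$ gate with accepting set $T\subseteq\mathbb Z_m$ outputs 1 iff the sum of its Boolean inputs modulo $m$ lies in $T$. *)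

theory Defs
  imports Main
begin

text \<open>A finite algebra is given by a finite universe type 'a (the universe is UNIV),
  a finite type 'f of operation symbols, an arity function ar and an
  interpretation F (F f is only ever applied to lists of length ar f).\<close>

inductive_set clo :: "('f \<Rightarrow> nat) \<Rightarrow> ('f \<Rightarrow> 'a list \<Rightarrow> 'a) \<Rightarrow> ((nat \<Rightarrow> 'a) \<Rightarrow> 'a) set"
  for ar :: "'f \<Rightarrow> nat" and F :: "'f \<Rightarrow> 'a list \<Rightarrow> 'a" where
  proj: "(\<lambda>v. v i) \<in> clo ar F"
| app: "(\<forall>i<ar f. g i \<in> clo ar F) \<Longrightarrow> (\<lambda>v. F f (map (\<lambda>i. g i v) [0..<ar f])) \<in> clo ar F"

definition tup3 :: "'a \<Rightarrow> 'a \<Rightarrow> 'a \<Rightarrow> nat \<Rightarrow> 'a" where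
  "tup3 x y z = (\<lambda>i. if i = 0 then x else if i = 1 then y else z)"

definition has_malcev :: "('f \<Rightarrow> nat) \<Rightarrow> ('f \<Rightarrow> 'a list \<Rightarrow> 'a) \<Rightarrow> bool" where
  "has_malcev ar F \<longleftrightarrow> (\<exists>d \<in> clo ar F. \<forall>x y. d (tup3 x y y) = x \<and> d (tup3 y y x) = x)"

definition is_cong :: "('f \<Rightarrow> nat) \<Rightarrow> ('f \<Rightarrow> 'a list \<Rightarrow> 'a) \<Rightarrow> ('a \<times> 'a) set \<Rightarrow> bool" where
  "is_cong ar F \<theta> \<longleftrightarrow> equiv UNIV \<theta> \<and>
     (\<forall>f xs ys. length xs = ar f \<longrightarrow> length ys = ar f \<longrightarrow>
        (\<forall>i<ar f. (xs ! i, ys ! i) \<in> \<theta>) \<longrightarrow> (F f xs, F f ys) \<in> \<theta>)"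

definition mrg :: "(nat \<Rightarrow> 'a) \<Rightarrow> (nat \<Rightarrow> 'a) \<Rightarrow> nat \<Rightarrow> 'a" where
  "mrg a c = (\<lambda>i. if even i then a (i div 2) else c (i div 2))"

text \<open>C(alpha,beta;delta): alpha centralizes beta modulo delta (term condition).
  Even-indexed variables form the first block, odd-indexed ones the second block.\<close>
definition centralizes :: "('f \<Rightarrow> nat) \<Rightarrow> ('f \<Rightarrow> 'a list \<Rightarrow> 'a) \<Rightarrow>
    ('a \<times> 'a) set \<Rightarrow> ('a \<times> 'a) set \<Rightarrow> ('a \<times> 'a) set \<Rightarrow> bool" where
  "centralizes ar F \<alpha> \<beta> \<delta> \<longleftrightarrow>
     (\<forall>t \<in> clo ar F. \<forall>a b c d. (\<forall>i. (a i, b i) \<in> \<alpha>) \<longrightarrow> (\<forall>i. (c i, d i) \<in> \<beta>) \<longrightarrow>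
        (t (mrg a c), t (mrg a d)) \<in> \<delta> \<longrightarrow> (t (mrg b c), t (mrg b d)) \<in> \<delta>)"

definition commutator :: "('f \<Rightarrow> nat) \<Rightarrow> ('f \<Rightarrow> 'a list \<Rightarrow> 'a) \<Rightarrow>
    ('a \<times> 'a) set \<Rightarrow> ('a \<times> 'a) set \<Rightarrow> ('a \<times> 'a) set" where
  "commutator ar F \<alpha> \<beta> = \<Inter> {\<delta>. is_cong ar F \<delta> \<and> centralizes ar F \<alpha> \<beta> \<delta>}"

primrec lcs :: "('f \<Rightarrow> nat) \<Rightarrow> ('f \<Rightarrow> 'a list \<Rightarrow> 'a) \<Rightarrow> nat \<Rightarrow> ('a \<times> 'a) set" where
  "lcs ar F 0 = UNIV"
| "lcs ar F (Suc k) = commutator ar F UNIV (lcs ar F k)"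

definition nilpotent :: "('f \<Rightarrow> nat) \<Rightarrow> ('f \<Rightarrow> 'a list \<Rightarrow> 'a) \<Rightarrow> bool" where
  "nilpotent ar F \<longleftrightarrow> (\<exists>k. lcs ar F k = Id)"

datatype ('f, 'a) cnode = In nat | Cst 'a | Gt 'f "nat list"

definition wf_circ :: "('f \<Rightarrow> nat) \<Rightarrow> nat \<Rightarrow> ('f, 'a) cnode list \<Rightarrow> bool" where
  "wf_circ ar n C \<longleftrightarrow> C \<noteq> [] \<and> (\<forall>j<length C. case C ! j of
       In i \<Rightarrow> i < n
     | Cst a \<Rightarrow> True
     | Gt f args \<Rightarrow> length args = ar f \<and> (\<forall>k\<in>set args. k < j))"

definition circ_step :: "('f \<Rightarrow> 'a list \<Rightarrow> 'a) \<Rightarrow> (nat \<Rightarrow> 'a) \<Rightarrow> 'a list \<Rightarrow> ('f, 'a) cnode \<Rightarrow> 'a list" where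
  "circ_step F x vals nd = vals @ [case nd of In i \<Rightarrow> x i | Cst a \<Rightarrow> a
        | Gt f args \<Rightarrow> F f (map (\<lambda>k. vals ! k) args)]"

definition circ_eval :: "('f \<Rightarrow> 'a list \<Rightarrow> 'a) \<Rightarrow> (nat \<Rightarrow> 'a) \<Rightarrow> ('f, 'a) cnode list \<Rightarrow> 'a" where
  "circ_eval F x C = last (foldl (circ_step F x) [] C)"

fun cfanin :: "('f, 'a) cnode \<Rightarrow> nat" where
  "cfanin (Gt f args) = length args"
| "cfanin _ = 0"

definition circ_size :: "('f, 'a) cnode list \<Rightarrow> nat" where
  "circ_size C = length C + sum_list (map cfanin C)"

definition nuP :: "('f \<Rightarrow> nat) \<Rightarrow> ('f \<Rightarrow> 'a list \<Rightarrow> 'a) \<Rightarrow> bool list set set" where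
  "nuP ar F = {L. \<exists>(t :: nat \<Rightarrow> ('f, 'a) cnode list) (\<iota> :: bool \<Rightarrow> 'a) (S :: 'a set).
      (\<forall>n\<ge>1. wf_circ ar n (t n)) \<and>
      (\<exists>c k :: nat. \<forall>n\<ge>1. circ_size (t n) \<le> c * n ^ k) \<and>
      L = {b. length b \<ge> 1 \<and> circ_eval F (\<lambda>i. \<iota> (b ! i)) (t (length b)) \<in> S}}"

text \<open>Nodes: an input variable, or a MOD_m gate with accepting set T and list of input wires.\<close>
datatype mnode = MIn nat | MGate "nat set" "nat list"

definition wf_mcirc :: "nat \<Rightarrow> mnode list \<Rightarrow> bool" where
  "wf_mcirc n C \<longleftrightarrow> C \<noteq> [] \<and> (\<forall>j<length C. case C ! j of
       MIn i \<Rightarrow> i < n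
     | MGate T args \<Rightarrow> (\<forall>k\<in>set args. k < j))"

definition mstep :: "nat \<Rightarrow> bool list \<Rightarrow> bool list \<Rightarrow> mnode \<Rightarrow> bool list" where
  "mstep m x vals nd = vals @ [case nd of MIn i \<Rightarrow> x ! i
        | MGate T args \<Rightarrow> (sum_list (map (\<lambda>k. if vals ! k then 1 else 0) args) mod m) \<in> T]"

definition meval :: "nat \<Rightarrow> bool list \<Rightarrow> mnode list \<Rightarrow> bool" where
  "meval m x C = last (foldl (mstep m x) [] C)"

definition dstep :: "nat list \<Rightarrow> mnode \<Rightarrow> nat list" where
  "dstep ds nd = ds @ [case nd of MIn i \<Rightarrow> 0
        | MGate T args \<Rightarrow> Suc (fold max (map (\<lambda>k. ds ! k) args) 0)]"

definition mdepth :: "mnode list \<Rightarrow> nat" where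
  "mdepth C = last (foldl dstep [] C)"

fun mfanin :: "mnode \<Rightarrow> nat" where
  "mfanin (MGate T args) = length args"
| "mfanin (MIn i) = 0"

definition msize :: "mnode list \<Rightarrow> nat" where
  "msize C = length C + sum_list (map mfanin C)"

definition CC0 :: "bool list set set" where
  "CC0 = {L. \<exists>(m :: nat) (d :: nat) (c :: nat) (k :: nat) (C :: nat \<Rightarrow> mnode list).
      m \<ge> 2 \<and>
      (\<forall>n. wf_mcirc n (C n) \<and> mdepth (C n) \<le> d \<and> msize (C n) \<le> c * n ^ k + c) \<and>
      (\<forall>b. b \<in> L \<longleftrightarrow> meval m b (C (length b)))}"

end

theory Submission
  imports Defs "HOL-Algebra.FiniteProduct"
begin


lemma clo_comp:
  assumes "g \<in> clo ar F" and "\<And>i. \<sigma> i \<in> clo ar F"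
  shows "(\<lambda>v. g (\<lambda>i. \<sigma> i v)) \<in> clo ar F"
  using assms(1)
proof (induction rule: clo.induct)
  case (proj i)
  then show ?case using assms(2) by simp
next
  case (app f g)
  then show ?case using clo.app[where f=f and g="\<lambda>i v. g i (\<lambda>i. \<sigma> i v)" and ar=ar and F=F] by simp
qed

lemma clo_proj[intro]: "(\<lambda>v. v i) \<in> clo ar F"
  by (rule clo.proj)

lemma clo_ren: "t \<in> clo ar F \<Longrightarrow> (\<lambda>v. t (\<lambda>k. v (s k))) \<in> clo ar F"
  using clo_comp[of t ar F "\<lambda>i v. v (s i)"] by auto

lemma clo_D[intro]:
  assumes "d \<in> clo ar F" "a \<in> clo ar F" "b \<in> clo ar F" "c \<in> clo ar F"
  shows "(\<lambda>v. d (tup3 (a v) (b v) (c v))) \<in> clo ar F"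
proof -
  have m: "\<And>i. tup3 a b c i \<in> clo ar F" using assms by (simp add: tup3_def)
  have eq: "tup3 a b c i v = tup3 (a v) (b v) (c v) i" for i v
    by (simp add: tup3_def)
  from clo_comp[OF assms(1) m] show ?thesis
    unfolding eq by simp
qed

lemma clo_resp:
  assumes "t \<in> clo ar F" "is_cong ar F \<theta>" "\<And>i. (x i, y i) \<in> \<theta>"
  shows "(t x, t y) \<in> \<theta>"
  using assms(1)
proof (induction rule: clo.induct)
  case (proj i)
  then show ?case using assms(3) by simp
next
  case (app f g)
  then show ?case using assms(2) unfolding is_cong_def by auto
qed

definition mrg3 :: "(nat \<Rightarrow> 'a) \<Rightarrow> (nat \<Rightarrow> 'a) \<Rightarrow> (nat \<Rightarrow> 'a) \<Rightarrow> nat \<Rightarrow> 'a" where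
  "mrg3 u1 u2 c = (\<lambda>k. if k mod 3 = 0 then u1 (k div 3) else if k mod 3 = 1 then u2 (k div 3) else c (k div 3))"

definition "s1 k = (if even k then 6*(k div 2) else (k::nat))"
definition "s2 k = (if even k then 6*(k div 2)+2 else (k::nat))"
definition "s3 k = (if even k then 6*(k div 2)+2 else 6*(k div 2)+(4::nat))"

lemma div3_simps[simp]: "Suc (3*q) div 3 = q" "Suc (3*q) mod 3 = 1" "Suc (Suc (3*q)) div 3 = q" "Suc (Suc (3*q)) mod 3 = 2" "(3*q) div 3 = q" "(3*q) mod 3 = (0::nat)"
  by presburger+

lemma s1_mrg: "(\<lambda>k. mrg (mrg3 u1 u2 c) w (s1 k)) = mrg u1 w"
  by (rule ext) (auto simp: mrg_def mrg3_def s1_def)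
lemma s2_mrg: "(\<lambda>k. mrg (mrg3 u1 u2 c) w (s2 k)) = mrg u2 w"
  by (rule ext) (auto simp: mrg_def mrg3_def s2_def elim!: evenE oddE)
lemma s3_mrg: "(\<lambda>k. mrg (mrg3 u1 u2 c) w (s3 k)) = mrg u2 c"
  by (rule ext) (auto simp: mrg_def mrg3_def s3_def elim!: evenE oddE)

lemma is_cong_refl: "is_cong ar F \<theta> \<Longrightarrow> (x, x) \<in> \<theta>"
  unfolding is_cong_def equiv_def refl_on_def by auto
lemma is_cong_sym: "is_cong ar F \<theta> \<Longrightarrow> (x, y) \<in> \<theta> \<Longrightarrow> (y, x) \<in> \<theta>"
  unfolding is_cong_def equiv_def sym_def by auto
lemma is_cong_trans: "is_cong ar F \<theta> \<Longrightarrow> (x, y) \<in> \<theta> \<Longrightarrow> (y, z) \<in> \<theta> \<Longrightarrow> (x, z) \<in> \<theta>"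
  unfolding is_cong_def equiv_def trans_def by blast

lemma TCX:
  assumes cent: "centralizes ar F UNIV \<beta> \<delta>" and dclo: "d \<in> clo ar F"
    and mal: "\<And>x y. d (tup3 x y y) = x" "\<And>x y. d (tup3 y y x) = x"
    and dc: "is_cong ar F \<delta>"
    and t: "t \<in> clo ar F" and ce: "\<And>i. (c i, e i) \<in> \<beta>"
  shows "(t (mrg u c), d (tup3 (t (mrg u e)) (t (mrg u' e)) (t (mrg u' c)))) \<in> \<delta>"
proof -
  define R where "R = (\<lambda>v. d (tup3 (t (\<lambda>k. v (s1 k))) (t (\<lambda>k. v (s2 k))) (t (\<lambda>k. v (s3 k)))))"
  have R: "R \<in> clo ar F" unfolding R_def
    by (rule clo_D[OF dclo]; rule clo_ren[OF t])
  have Rv: "R (mrg (mrg3 u1 u2 c) w) = d (tup3 (t (mrg u1 w)) (t (mrg u2 w)) (t (mrg u2 c)))" for u1 u2 w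
    unfolding R_def s1_mrg s2_mrg s3_mrg ..
  have A: "(R (mrg (mrg3 u' u' c) c), R (mrg (mrg3 u' u' c) e)) \<in> \<delta>"
    unfolding Rv mal by (rule is_cong_refl[OF dc])
  have "\<forall>a b c' e'. (\<forall>i. (a i, b i) \<in> UNIV) \<longrightarrow> (\<forall>i. (c' i, e' i) \<in> \<beta>) \<longrightarrow>
      (R (mrg a c'), R (mrg a e')) \<in> \<delta> \<longrightarrow> (R (mrg b c'), R (mrg b e')) \<in> \<delta>"
    using cent R unfolding centralizes_def by (rule bspec)
  then have "(R (mrg (mrg3 u u' c) c), R (mrg (mrg3 u u' c) e)) \<in> \<delta>"
    using A ce by blast
  then show ?thesis unfolding Rv mal .
qed


locale calg =
  fixes ar :: "'f \<Rightarrow> nat" and F :: "'f \<Rightarrow> 'a::finite list \<Rightarrow> 'a" and d :: "(nat \<Rightarrow> 'a) \<Rightarrow> 'a"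
    and \<beta> \<delta> :: "('a \<times> 'a) set" and ob :: 'a
  assumes dclo: "d \<in> clo ar F"
    and mal1[simp]: "\<And>x y. d (tup3 x y y) = x" and mal2[simp]: "\<And>x y. d (tup3 y y x) = x"
    and cb: "is_cong ar F \<beta>" and cd: "is_cong ar F \<delta>" and sub: "\<delta> \<subseteq> \<beta>"
    and cent: "centralizes ar F UNIV \<beta> \<delta>"
begin

abbreviation D :: "'a \<Rightarrow> 'a \<Rightarrow> 'a \<Rightarrow> 'a" where "D x y z \<equiv> d (tup3 x y z)"

lemma D_cong:
  assumes "is_cong ar F \<theta>" "(x, x') \<in> \<theta>" "(y, y') \<in> \<theta>" "(z, z') \<in> \<theta>"
  shows "(D x y z, D x' y' z') \<in> \<theta>"
  using clo_resp[OF dclo assms(1), of "tup3 x y z" "tup3 x' y' z'"] assms(2-4)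
  by (simp add: tup3_def)

lemma bref: "(x, x) \<in> \<beta>" using is_cong_refl[OF cb] .
lemma dref: "(x, x) \<in> \<delta>" using is_cong_refl[OF cd] .
lemma bsym: "(x, y) \<in> \<beta> \<Longrightarrow> (y, x) \<in> \<beta>" using is_cong_sym[OF cb] .
lemma dsym: "(x, y) \<in> \<delta> \<Longrightarrow> (y, x) \<in> \<delta>" using is_cong_sym[OF cd] .
lemma btr: "(x, y) \<in> \<beta> \<Longrightarrow> (y, z) \<in> \<beta> \<Longrightarrow> (x, z) \<in> \<beta>" using is_cong_trans[OF cb] .
lemma dtr: "(x, y) \<in> \<delta> \<Longrightarrow> (y, z) \<in> \<delta> \<Longrightarrow> (x, z) \<in> \<delta>" using is_cong_trans[OF cd] .

lemma mrg_simps[simp]: "mrg u w 0 = u 0" "mrg u w (Suc 0) = w 0" "mrg u w 2 = u 1" "mrg u w 3 = w 1"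
  "mrg u w 4 = u 2"
  by (simp_all add: mrg_def)

lemma tup3_simps[simp]: "tup3 x y z 0 = x" "tup3 x y z (Suc 0) = y" "tup3 x y z 2 = z"
  by (simp_all add: tup3_def)

lemma TCv:
  assumes "(\<lambda>v. \<phi> (v 0) (v 2) (v 4) (v 1) (v 3)) \<in> clo ar F" "(c1, e1) \<in> \<beta>" "(c2, e2) \<in> \<beta>"
  shows "(\<phi> x1 x2 x3 c1 c2, D (\<phi> x1 x2 x3 e1 e2) (\<phi> y1 y2 y3 e1 e2) (\<phi> y1 y2 y3 c1 c2)) \<in> \<delta>"
proof -
  have ce: "\<And>i. (tup3 c1 c2 c2 i, tup3 e1 e2 e2 i) \<in> \<beta>" using assms(2,3) by (simp add: tup3_def)
  from TCX[where c="tup3 c1 c2 c2" and e="tup3 e1 e2 e2" and u="tup3 x1 x2 x3" and u'="tup3 y1 y2 y3", OF cent dclo mal1 mal2 cd assms(1) ce]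
  show ?thesis by simp
qed

lemma E1: assumes "(y, ob) \<in> \<beta>" shows "(D y ob x, D x ob y) \<in> \<delta>"
proof -
  have "(D y ob x, D (D ob ob x) (D ob ob ob) (D y ob ob)) \<in> \<delta>"
    by (rule TCv[where \<phi>="\<lambda>x1 x2 x3 w1 w2. D w1 x2 x1"]) (use assms bref in \<open>auto intro!: clo_D dclo\<close>)
  then show ?thesis by simp
qed

lemma E2: assumes "(y, ob) \<in> \<beta>" "(z, ob) \<in> \<beta>" shows "(D (D x ob y) ob z, D x ob (D y ob z)) \<in> \<delta>"
proof -
  have "(D (D x ob y) ob z, D (D (D x ob ob) ob ob) (D (D ob ob ob) ob ob) (D (D ob ob y) ob z)) \<in> \<delta>"
    by (rule TCv[where \<phi>="\<lambda>x1 x2 x3 w1 w2. D (D x1 x2 w1) x2 w2"]) (use assms bref in \<open>auto intro!: clo_D dclo\<close>)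
  then show ?thesis by simp
qed

lemma E3: assumes "(x, ob) \<in> \<beta>" shows "(D x ob (D ob x ob), ob) \<in> \<delta>"
proof -
  have "(D x x ob, D (D x ob ob) (D ob ob ob) (D ob x ob)) \<in> \<delta>"
    by (rule TCv[where \<phi>="\<lambda>x1 x2 x3 w1 w2. D x1 w1 x2"]) (use assms bref in \<open>auto intro!: clo_D dclo\<close>)
  then show ?thesis by (simp add: dsym)
qed

lemma E4: assumes "(y, r) \<in> \<beta>" shows "(D (D y r ob) ob r, y) \<in> \<delta>"
proof -
  have "(D (D y r ob) ob r, D (D (D r r ob) ob r) (D (D r ob ob) ob ob) (D (D y ob ob) ob ob)) \<in> \<delta>"
    by (rule TCv[where \<phi>="\<lambda>x1 x2 x3 w1 w2. D (D w1 x1 x2) x2 x1"]) (use assms bref in \<open>auto intro!: clo_D dclo\<close>)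
  then show ?thesis by simp
qed

lemma E6: assumes "(u, ob) \<in> \<beta>" "(u', ob) \<in> \<beta>" shows "(D (D u ob u') u ob, u') \<in> \<delta>"
proof -
  have "(D (D u ob u') u ob, D (D (D u ob ob) u ob) (D (D ob ob ob) ob ob) (D (D ob ob u') ob ob)) \<in> \<delta>"
    by (rule TCv[where \<phi>="\<lambda>x1 x2 x3 w1 w2. D (D x1 x2 w1) x1 x2"]) (use assms bref in \<open>auto intro!: clo_D dclo\<close>)
  then show ?thesis by simp
qed

lemma E5: assumes "(a, b) \<in> \<beta>" "(b, c) \<in> \<beta>" shows "(D c a ob, D (D b a ob) ob (D c b ob)) \<in> \<delta>"
proof -
  have 1: "(D (D b a ob) ob (D c b ob), D (D (D a a ob) ob (D c a ob)) (D (D a ob ob) ob (D c a ob)) (D (D b ob ob) ob (D c b ob))) \<in> \<delta>"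
    by (rule TCv[where \<phi>="\<lambda>x1 x2 x3 w1 w2. D (D w1 x1 x2) x2 (D x3 w1 x2)"]) (use assms bref bsym[OF assms(1)] in \<open>auto intro!: clo_D dclo\<close>)
  have X: "(D w ob (D c w ob), c) \<in> \<delta>" if "(c, w) \<in> \<beta>" for w
  proof -
    have "(D c w ob, D w w ob) \<in> \<beta>" using D_cong[OF cb that bref bref] .
    then have "(D c w ob, ob) \<in> \<beta>" by simp
    from E1[OF this, of w] have "(D w ob (D c w ob), D (D c w ob) ob w) \<in> \<delta>" by (rule dsym)
    then show ?thesis using E4[OF that] dtr by blast
  qed
  have ca: "(c, a) \<in> \<beta>" using assms bsym btr by blast
  have cb': "(c, b) \<in> \<beta>" using assms bsym by blast
  from 1 have "(D (D b a ob) ob (D c b ob), D (D c a ob) (D a ob (D c a ob)) (D b ob (D c b ob))) \<in> \<delta>" by simp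
  moreover have "(D (D c a ob) (D a ob (D c a ob)) (D b ob (D c b ob)), D (D c a ob) c c) \<in> \<delta>"
    by (rule D_cong[OF cd dref X[OF ca] X[OF cb']])
  ultimately have "(D (D b a ob) ob (D c b ob), D c a ob) \<in> \<delta>" using dtr by simp
  then show ?thesis by (rule dsym)
qed

end


lemma nth_upd: "j < length xs \<Longrightarrow> xs[i := x] ! j = (if i = j then x else xs ! j)"
  by (cases "i = j") auto

lemma map_upd_if: "(map g [0..<n])[i := a] = map (\<lambda>k. if k = i then a else g k) [0..<n]"
  by (rule nth_equalityI) (auto simp: nth_upd)

lemma clo_Fupd:
  assumes "T \<in> clo ar F"
  shows "(\<lambda>v. F f ((map (\<lambda>k. v (2*k)) [0..<ar f])[i := T v])) \<in> clo ar F"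
proof -
  have "(\<lambda>v. F f (map (\<lambda>k. (if k = i then T else (\<lambda>v. v (2*k))) v) [0..<ar f])) \<in> clo ar F"
    by (rule clo.app) (use assms in auto)
  moreover have "\<And>k v. (if k = i then T else (\<lambda>v. v (2*k))) v = (if k = i then T v else v (2*k))"
    by simp
  ultimately show ?thesis unfolding map_upd_if by simp
qed

lemma F_cong:
  assumes "is_cong ar F \<theta>" "length xs = ar f" "length ys = ar f" "\<And>i. i < ar f \<Longrightarrow> (xs ! i, ys ! i) \<in> \<theta>"
  shows "(F f xs, F f ys) \<in> \<theta>"
  using assms unfolding is_cong_def by blast

lemma repl_upd_same[simp]: "(replicate n a)[i := a] = replicate n a"
proof (cases "i < n")
  case True then show ?thesis using list_update_id[of "replicate n a" i] by simp
next
  case False then show ?thesis by (simp add: list_update_beyond)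
qed

context calg begin

definition lam :: "'f \<Rightarrow> nat \<Rightarrow> 'a \<Rightarrow> 'a" where
  "lam f i u = D (F f ((replicate (ar f) ob)[i := u])) (F f (replicate (ar f) ob)) ob"

lemma lam_cong: "(u, u') \<in> \<delta> \<Longrightarrow> (lam f i u, lam f i u') \<in> \<delta>"
  unfolding lam_def
  by (rule D_cong[OF cd _ dref dref], rule F_cong[OF cd]) (auto simp: nth_upd dref)

lemma lam_ob[simp]: "lam f i ob = ob"
  by (simp add: lam_def)

lemma E7:
  assumes zs: "length zs = ar f" and i: "i < ar f" and xy: "(x, y) \<in> \<beta>"
  shows "(D (F f (zs[i := y])) (F f (zs[i := x])) ob, lam f i (D y x ob)) \<in> \<delta>"
proof -
  define r where "r = ar f"
  define t where "t = (\<lambda>v. D (F f ((map (\<lambda>k. v (2*k)) [0..<ar f])[i := D (v 1) (v (2*(Suc r))) (v (2*r))]))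
         (F f ((map (\<lambda>k. v (2*k)) [0..<ar f])[i := v (2*r)])) (v (2*(Suc r))))"
  have t: "t \<in> clo ar F" unfolding t_def
    by (intro clo_D dclo clo_Fupd clo_proj)
  define u where "u = (\<lambda>k. if k < r then zs ! k else if k = r then x else ob)"
  have ce: "\<And>j. ((\<lambda>_. D y x ob) j, (\<lambda>_. ob) j) \<in> \<beta>"
    using D_cong[OF cb bsym[OF xy] bref[of x] bref[of ob]] by simp
  from TCX[where c="\<lambda>_. D y x ob" and e="\<lambda>_. ob" and u=u and u'="\<lambda>_. ob", OF cent dclo mal1 mal2 cd t ce]
  have 1: "(t (mrg u (\<lambda>_. D y x ob)), D (t (mrg u (\<lambda>_. ob))) (t (mrg (\<lambda>_. ob) (\<lambda>_. ob))) (t (mrg (\<lambda>_. ob) (\<lambda>_. D y x ob)))) \<in> \<delta>" .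
  have mz: "map (\<lambda>k. u k) [0..<ar f] = zs"
    by (rule nth_equalityI) (auto simp: u_def zs r_def)
  have mrg2: "mrg a w (2*k) = a k" "mrg a w (Suc 0) = w 0" for a w k
    by (simp_all add: mrg_def)
  have ur: "u r = x" "u (Suc r) = ob" by (simp_all add: u_def)
  have 2: "t (mrg u (\<lambda>_. D y x ob)) = D (F f (zs[i := D (D y x ob) ob x])) (F f (zs[i := x])) ob"
    unfolding t_def mrg2 mz ur by simp
  have 3: "t (mrg u (\<lambda>_. ob)) = ob"
    unfolding t_def mrg2 mz ur by simp
  have 4: "t (mrg (\<lambda>_. ob) (\<lambda>_. ob)) = ob"
    unfolding t_def mrg2 by (simp add: map_replicate_const)
  have 5: "t (mrg (\<lambda>_. ob) (\<lambda>_. D y x ob)) = lam f i (D y x ob)"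
    unfolding t_def mrg2 lam_def by (simp add: map_replicate_const)
  from 1 have A: "(D (F f (zs[i := D (D y x ob) ob x])) (F f (zs[i := x])) ob, lam f i (D y x ob)) \<in> \<delta>"
    unfolding 2 3 4 5 by simp
  have "(D (F f (zs[i := y])) (F f (zs[i := x])) ob, D (F f (zs[i := D (D y x ob) ob x])) (F f (zs[i := x])) ob) \<in> \<delta>"
    using dsym[OF E4[OF bsym[OF xy]]]
    by (intro D_cong[OF cd _ dref dref] F_cong[OF cd]) (auto simp: zs nth_upd dref)
  with A show ?thesis using dtr by blast
qed

definition Bs :: "'a set" where "Bs = {x. (x, ob) \<in> \<beta>}"

lemma lam_Bs: "u \<in> Bs \<Longrightarrow> lam f i u \<in> Bs"
  unfolding Bs_def lam_def
proof -
  assume "u \<in> {x. (x, ob) \<in> \<beta>}"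
  then have "(F f ((replicate (ar f) ob)[i := u]), F f (replicate (ar f) ob)) \<in> \<beta>"
    by (intro F_cong[OF cb]) (auto simp: nth_upd bref)
  from D_cong[OF cb this bref[of "F f (replicate (ar f) ob)"] bref[of ob]] show "D (F f ((replicate (ar f) ob)[i := u])) (F f (replicate (ar f) ob)) ob \<in> {x. (x, ob) \<in> \<beta>}"
    by simp
qed

lemma Bs_D: "x \<in> Bs \<Longrightarrow> y \<in> Bs \<Longrightarrow> D x ob y \<in> Bs"
  unfolding Bs_def using D_cong[OF cb _ bref[of ob], of x ob y ob] by simp

lemma Bs_ob[simp]: "ob \<in> Bs" unfolding Bs_def by (simp add: bref)

lemma Bs_diff: "(x, y) \<in> \<beta> \<Longrightarrow> D y x ob \<in> Bs"
  unfolding Bs_def using D_cong[OF cb bsym bref[of x] bref[of ob], of x y] by simp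

lemma E8:
  assumes u: "u \<in> Bs" and u': "u' \<in> Bs" and i: "i < ar f"
  shows "(lam f i (D u ob u'), D (lam f i u) ob (lam f i u')) \<in> \<delta>"
proof -
  define os where "os = replicate (ar f) ob"
  define a where "a = F f os"
  define b where "b = F f (os[i := u])"
  define c where "c = F f (os[i := D u ob u'])"
  have uo: "(u, ob) \<in> \<beta>" "(u', ob) \<in> \<beta>" using u u' by (auto simp: Bs_def)
  have ab: "(a, b) \<in> \<beta>" unfolding a_def b_def os_def
    by (intro F_cong[OF cb]) (auto simp: nth_upd bref bsym uo)
  have "(u, D u ob u') \<in> \<beta>" using D_cong[OF cb bref[of u] bref[of ob] bsym[OF uo(2)]] by simp
  then have bc: "(b, c) \<in> \<beta>" unfolding b_def c_def os_def
    by (intro F_cong[OF cb]) (auto simp: nth_upd bref)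
  from E5[OF ab bc] have 1: "(D c a ob, D (D b a ob) ob (D c b ob)) \<in> \<delta>" .
  have ca: "D c a ob = lam f i (D u ob u')" "D b a ob = lam f i u"
    by (simp_all add: a_def b_def c_def os_def lam_def)
  have "(D c b ob, lam f i (D (D u ob u') u ob)) \<in> \<delta>"
    using E7[of os f i u "D u ob u'"] \<open>(u, D u ob u') \<in> \<beta>\<close> i
    by (simp add: os_def b_def c_def)
  moreover have "(lam f i (D (D u ob u') u ob), lam f i u') \<in> \<delta>"
    by (rule lam_cong[OF E6[OF uo]])
  ultimately have "(D c b ob, lam f i u') \<in> \<delta>" using dtr by blast
  then have "(D (D b a ob) ob (D c b ob), D (lam f i u) ob (lam f i u')) \<in> \<delta>"
    unfolding ca by (rule D_cong[OF cd dref dref])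
  with 1 show ?thesis unfolding ca using dtr by blast
qed

end


definition gwf :: "('f \<Rightarrow> nat) \<Rightarrow> ('f, 'a) cnode list \<Rightarrow> bool" where
  "gwf ar C \<longleftrightarrow> (\<forall>j<length C. case C ! j of Gt f args \<Rightarrow> length args = ar f \<and> (\<forall>k\<in>set args. k < j) | _ \<Rightarrow> True)"

definition isval :: "('f \<Rightarrow> 'a list \<Rightarrow> 'a) \<Rightarrow> ('f, 'a) cnode list \<Rightarrow> 'a list \<Rightarrow> bool" where
  "isval F C vs \<longleftrightarrow> length vs = length C \<and>
     (\<forall>j<length C. case C ! j of Gt f args \<Rightarrow> vs ! j = F f (map (\<lambda>k. vs ! k) args) | _ \<Rightarrow> True)"

definition loc :: "('a \<Rightarrow> 'a) \<Rightarrow> ('f, 'a) cnode list \<Rightarrow> 'a list \<Rightarrow> nat \<Rightarrow> 'a list" where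
  "loc \<rho> C vs w = (case C ! w of Gt f args \<Rightarrow> map (\<lambda>k. \<rho> (vs ! k)) args | _ \<Rightarrow> [vs ! w])"

context calg begin

definition cls :: "'a \<Rightarrow> 'a set" where "cls x = \<delta> `` {x}"
definition rep :: "'a set \<Rightarrow> 'a" where "rep X = (SOME x. x \<in> X)"
definition G :: "'a set monoid" where
  "G = \<lparr>carrier = cls ` Bs, mult = (\<lambda>X Y. cls (D (rep X) ob (rep Y))), one = cls ob\<rparr>"

lemma equivd: "equiv UNIV \<delta>" using cd unfolding is_cong_def by blast
lemma equivb: "equiv UNIV \<beta>" using cb unfolding is_cong_def by blast

lemma cls_eq: "cls x = cls y \<longleftrightarrow> (x, y) \<in> \<delta>"
  unfolding cls_def using equiv_class_eq_iff[OF equivd] by simp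

lemma rep_cls: "(x, rep (cls x)) \<in> \<delta>"
proof -
  have "x \<in> cls x" unfolding cls_def using dref by simp
  then have "rep (cls x) \<in> cls x" unfolding rep_def by (rule someI)
  then show ?thesis unfolding cls_def by simp
qed

lemma G_carrier: "carrier G = cls ` Bs" by (simp add: G_def)
lemma G_one: "one G = cls ob" by (simp add: G_def)
lemma mult_cls: "cls x \<otimes>\<^bsub>G\<^esub> cls y = cls (D x ob y)"
proof -
  have "(D (rep (cls x)) ob (rep (cls y)), D x ob y) \<in> \<delta>"
    by (rule D_cong[OF cd dsym[OF rep_cls] dref dsym[OF rep_cls]])
  then show ?thesis unfolding G_def by (simp add: cls_eq)
qed

lemma G_cg: "comm_group G"
proof (rule comm_groupI)
  fix X Y assume "X \<in> carrier G" "Y \<in> carrier G"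
  then obtain x y where "x \<in> Bs" "y \<in> Bs" "X = cls x" "Y = cls y" by (auto simp: G_carrier)
  then show "X \<otimes>\<^bsub>G\<^esub> Y \<in> carrier G" by (simp add: mult_cls G_carrier Bs_D)
  show "X \<otimes>\<^bsub>G\<^esub> Y = Y \<otimes>\<^bsub>G\<^esub> X" using \<open>x \<in> Bs\<close> \<open>y \<in> Bs\<close> \<open>X = cls x\<close> \<open>Y = cls y\<close>
    by (simp add: mult_cls cls_eq E1 Bs_def)
next
  show "\<one>\<^bsub>G\<^esub> \<in> carrier G" by (simp add: G_one G_carrier)
next
  fix X Y Z assume "X \<in> carrier G" "Y \<in> carrier G" "Z \<in> carrier G"
  then obtain x y z where "x \<in> Bs" "y \<in> Bs" "z \<in> Bs" "X = cls x" "Y = cls y" "Z = cls z" by (auto simp: G_carrier)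
  then show "X \<otimes>\<^bsub>G\<^esub> Y \<otimes>\<^bsub>G\<^esub> Z = X \<otimes>\<^bsub>G\<^esub> (Y \<otimes>\<^bsub>G\<^esub> Z)"
    by (simp add: mult_cls cls_eq E2 Bs_def)
next
  fix X assume "X \<in> carrier G"
  then obtain x where x: "x \<in> Bs" "X = cls x" by (auto simp: G_carrier)
  then show "\<one>\<^bsub>G\<^esub> \<otimes>\<^bsub>G\<^esub> X = X" by (simp add: G_one mult_cls)
  have xi: "D ob x ob \<in> Bs" using Bs_diff[of x ob] x(1) unfolding Bs_def by blast
  have "(D (D ob x ob) ob x, D x ob (D ob x ob)) \<in> \<delta>"
    using E1[of "D ob x ob" x] xi by (simp add: Bs_def)
  moreover have "(D x ob (D ob x ob), ob) \<in> \<delta>" using E3 x by (simp add: Bs_def)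
  ultimately have "(D (D ob x ob) ob x, ob) \<in> \<delta>" using dtr by blast
  then have "cls (D ob x ob) \<otimes>\<^bsub>G\<^esub> X = \<one>\<^bsub>G\<^esub>" using x by (simp add: mult_cls G_one cls_eq)
  then show "\<exists>Y\<in>carrier G. Y \<otimes>\<^bsub>G\<^esub> X = \<one>\<^bsub>G\<^esub>" using xi by (auto simp: G_carrier)
qed

lemma cls_carrier[simp]: "x \<in> Bs \<Longrightarrow> cls x \<in> carrier G" by (simp add: G_carrier)

lemma finite_carrier: "finite (carrier G)" by (simp add: G_carrier)

lemma card_pos: "card (carrier G) > 0"
  using finite_carrier cls_carrier[OF Bs_ob] card_gt_0_iff by blast

lemma pow_mod:
  assumes "X \<in> carrier G"
  shows "X [^]\<^bsub>G\<^esub> (n::nat) = X [^]\<^bsub>G\<^esub> (n mod card (carrier G))"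
proof -
  interpret Gi: comm_group G by (rule G_cg)
  define M where "M = card (carrier G)"
  have "X [^]\<^bsub>G\<^esub> n = X [^]\<^bsub>G\<^esub> (M * (n div M) + n mod M)" by simp
  also have "\<dots> = X [^]\<^bsub>G\<^esub> (M * (n div M)) \<otimes>\<^bsub>G\<^esub> X [^]\<^bsub>G\<^esub> (n mod M)"
    using assms by (simp add: Gi.nat_pow_mult)
  also have "X [^]\<^bsub>G\<^esub> (M * (n div M)) = \<one>\<^bsub>G\<^esub>"
    using assms Gi.power_order_eq_one[OF finite_carrier assms] by (simp add: Gi.nat_pow_pow[symmetric] M_def)
  finally show ?thesis using assms by (simp add: M_def)
qed

lemma count_prod:
  fixes N :: nat
  assumes g: "\<And>w. w < N \<Longrightarrow> g w \<in> Bs"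
  shows "finprod G (\<lambda>w. cls (g w)) {..<N} =
    finprod G (\<lambda>a. cls a [^]\<^bsub>G\<^esub> (card {w. w < N \<and> g w = a} mod card (carrier G))) Bs"
proof -
  interpret Gi: comm_group G by (rule G_cg)
  have U: "{..<N} = (\<Union>a\<in>Bs. {w. w < N \<and> g w = a})" using g by auto
  have fin: "\<And>a. finite {w. w < N \<and> g w = a}" by (rule finite_subset[of _ "{..<N}"]) auto
  have "finprod G (\<lambda>w. cls (g w)) {..<N} = finprod G (\<lambda>a. finprod G (\<lambda>w. cls (g w)) {w. w < N \<and> g w = a}) Bs"
    unfolding U
    by (rule Gi.finprod_UN_disjoint) (auto simp: pairwise_def disjnt_def g fin)
  also have "\<dots> = finprod G (\<lambda>a. cls a [^]\<^bsub>G\<^esub> card {w. w < N \<and> g w = a}) Bs"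
  proof (rule Gi.finprod_cong')
    fix a assume a: "a \<in> Bs"
    have "finprod G (\<lambda>w. cls (g w)) {w. w < N \<and> g w = a} = finprod G (\<lambda>w. cls a) {w. w < N \<and> g w = a}"
      by (rule Gi.finprod_cong') (use a in auto)
    also have "\<dots> = cls a [^]\<^bsub>G\<^esub> card {w. w < N \<and> g w = a}" using a by (simp add: Gi.finprod_const)
    finally show "finprod G (\<lambda>w. cls (g w)) {w. w < N \<and> g w = a} = cls a [^]\<^bsub>G\<^esub> card {w. w < N \<and> g w = a}" .
  qed auto
  also have "\<dots> = finprod G (\<lambda>a. cls a [^]\<^bsub>G\<^esub> (card {w. w < N \<and> g w = a} mod card (carrier G))) Bs"
    by (rule Gi.finprod_cong') (auto simp: pow_mod[symmetric])
  finally show ?thesis .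
qed

lemma hom_finprod:
  assumes cl: "\<And>X. X \<in> carrier G \<Longrightarrow> \<phi> X \<in> carrier G"
    and hm: "\<And>X Y. X \<in> carrier G \<Longrightarrow> Y \<in> carrier G \<Longrightarrow> \<phi> (X \<otimes>\<^bsub>G\<^esub> Y) = \<phi> X \<otimes>\<^bsub>G\<^esub> \<phi> Y"
    and one: "\<phi> \<one>\<^bsub>G\<^esub> = \<one>\<^bsub>G\<^esub>"
    and fin: "finite A" and g: "g \<in> A \<rightarrow> carrier G"
  shows "\<phi> (finprod G g A) = finprod G (\<lambda>x. \<phi> (g x)) A"
proof -
  interpret Gi: comm_group G by (rule G_cg)
  show ?thesis
  using fin g
  proof (induction A rule: finite_induct)
    case empty
    then show ?case using one by simp
  next
    case (insert a A)
    have ga: "g a \<in> carrier G" "g \<in> A \<rightarrow> carrier G" using insert.prems by auto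
    have pa: "(\<lambda>x. \<phi> (g x)) \<in> A \<rightarrow> carrier G" "\<phi> (g a) \<in> carrier G" using ga cl by auto
    show ?case
      using insert.hyps insert.IH[OF ga(2)] ga pa
      by (simp add: Gi.finprod_insert hm Gi.finprod_closed)
  qed
qed

lemma finprod_exch:
  fixes r :: nat
  assumes "finite W" "\<And>i w. X i w \<in> carrier G"
  shows "finprod G (\<lambda>i. finprod G (\<lambda>w. X i w) W) {..<r} = finprod G (\<lambda>w. finprod G (\<lambda>i. X i w) {..<r}) W"
proof (induction r)
  case 0
  interpret Gi: comm_group G by (rule G_cg)
  show ?case by (simp add: Gi.finprod_one)
next
  case (Suc r)
  interpret Gi: comm_group G by (rule G_cg)
  have "finprod G (\<lambda>i. finprod G (\<lambda>w. X i w) W) {..<Suc r} =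
      finprod G (\<lambda>w. X r w) W \<otimes>\<^bsub>G\<^esub> finprod G (\<lambda>i. finprod G (\<lambda>w. X i w) W) {..<r}"
    unfolding lessThan_Suc using assms by (simp add: Gi.finprod_insert Pi_def Gi.finprod_closed)
  also have "\<dots> = finprod G (\<lambda>w. X r w \<otimes>\<^bsub>G\<^esub> finprod G (\<lambda>i. X i w) {..<r}) W"
    unfolding Suc using assms by (simp add: Gi.finprod_multf Pi_def Gi.finprod_closed)
  also have "\<dots> = finprod G (\<lambda>w. finprod G (\<lambda>i. X i w) {..<Suc r}) W"
    unfolding lessThan_Suc using assms by (simp add: Gi.finprod_insert Pi_def)
  finally show ?case .
qed

definition lamh :: "'f \<Rightarrow> nat \<Rightarrow> 'a set \<Rightarrow> 'a set" where "lamh f i X = cls (lam f i (rep X))"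

lemma lamh_cls: "lamh f i (cls u) = cls (lam f i u)"
  unfolding lamh_def cls_eq by (rule lam_cong[OF dsym[OF rep_cls]])

lemma lamh_finprod:
  assumes i: "i < ar f" and fin: "finite A" and g: "\<And>w. g w \<in> Bs"
  shows "lamh f i (finprod G (\<lambda>w. cls (g w)) A) = finprod G (\<lambda>w. cls (lam f i (g w))) A"
proof -
  have "lamh f i (finprod G (\<lambda>w. cls (g w)) A) = finprod G (\<lambda>w. lamh f i (cls (g w))) A"
  proof (rule hom_finprod[OF _ _ _ fin])
    fix X assume "X \<in> carrier G"
    then show "lamh f i X \<in> carrier G" by (auto simp: G_carrier lamh_cls lam_Bs)
  next
    fix X Y assume "X \<in> carrier G" "Y \<in> carrier G"
    then obtain x y where "x \<in> Bs" "y \<in> Bs" "X = cls x" "Y = cls y" by (auto simp: G_carrier)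
    then show "lamh f i (X \<otimes>\<^bsub>G\<^esub> Y) = lamh f i X \<otimes>\<^bsub>G\<^esub> lamh f i Y"
      by (simp add: mult_cls lamh_cls cls_eq E8 i)
  next
    show "lamh f i \<one>\<^bsub>G\<^esub> = \<one>\<^bsub>G\<^esub>" by (simp add: G_one lamh_cls)
  qed (use g in auto)
  then show ?thesis by (simp add: lamh_cls)
qed

end


context calg begin

lemma tele:
  assumes xs: "length xs = ar f" and ys: "length ys = ar f" and xy: "\<And>i. i < ar f \<Longrightarrow> (xs ! i, ys ! i) \<in> \<beta>"
  shows "cls (D (F f ys) (F f xs) ob) = finprod G (\<lambda>i. cls (lam f i (D (ys ! i) (xs ! i) ob))) {..<ar f}"
proof -
  interpret Gi: comm_group G by (rule G_cg)
  define zs where "zs k = map (\<lambda>j. if j < k then ys ! j else xs ! j) [0..<ar f]" for k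
  have zl: "length (zs k) = ar f" for k by (simp add: zs_def)
  have zn: "j < ar f \<Longrightarrow> zs k ! j = (if j < k then ys ! j else xs ! j)" for k j by (simp add: zs_def)
  have xz: "(F f xs, F f (zs k)) \<in> \<beta>" for k
    by (rule F_cong[OF cb xs zl]) (simp add: zn xy bref)
  have cl: "\<And>i. i < ar f \<Longrightarrow> cls (lam f i (D (ys ! i) (xs ! i) ob)) \<in> carrier G"
    using xy by (simp add: lam_Bs Bs_diff)
  have "k \<le> ar f \<Longrightarrow> cls (D (F f (zs k)) (F f xs) ob) = finprod G (\<lambda>i. cls (lam f i (D (ys ! i) (xs ! i) ob))) {..<k}" for k
  proof (induction k)
    case 0
    have "zs 0 = xs" by (rule nth_equalityI) (simp_all add: zl zn xs)
    then show ?case by (simp add: G_one[symmetric])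
  next
    case (Suc k)
    then have k: "k < ar f" by simp
    have z1: "zs (Suc k) = (zs k)[k := ys ! k]" by (rule nth_equalityI) (auto simp: zl zn nth_upd)
    have z0: "zs k = (zs k)[k := xs ! k]" by (rule nth_equalityI) (auto simp: zl zn nth_upd)
    have bc: "(F f (zs k), F f (zs (Suc k))) \<in> \<beta>"
      by (rule F_cong[OF cb zl zl]) (simp add: zn xy bref k)
    have 1: "cls (D (F f (zs (Suc k))) (F f xs) ob) = cls (D (F f (zs k)) (F f xs) ob) \<otimes>\<^bsub>G\<^esub> cls (D (F f (zs (Suc k))) (F f (zs k)) ob)"
      using E5[OF xz bc] by (simp add: mult_cls cls_eq)
    have "(D (F f ((zs k)[k := ys ! k])) (F f ((zs k)[k := xs ! k])) ob, lam f k (D (ys ! k) (xs ! k) ob)) \<in> \<delta>"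
      by (rule E7[OF zl k xy[OF k]])
    then have 2: "cls (D (F f (zs (Suc k))) (F f (zs k)) ob) = cls (lam f k (D (ys ! k) (xs ! k) ob))"
      using z1 z0 by (simp add: cls_eq)
    have "finprod G (\<lambda>i. cls (lam f i (D (ys ! i) (xs ! i) ob))) {..<Suc k} =
       cls (lam f k (D (ys ! k) (xs ! k) ob)) \<otimes>\<^bsub>G\<^esub> finprod G (\<lambda>i. cls (lam f i (D (ys ! i) (xs ! i) ob))) {..<k}"
      unfolding lessThan_Suc using k cl by (simp add: Gi.finprod_insert Pi_def)
    then show ?case using 1 2 Suc.IH k cl
      by (simp add: Gi.m_comm Gi.finprod_closed Pi_def)
  qed
  note K = this[of "ar f", OF order_refl]
  moreover have "zs (ar f) = ys" by (rule nth_equalityI) (simp_all add: zl zn ys)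
  ultimately show ?thesis by simp
qed

definition rho :: "'a \<Rightarrow> 'a" where "rho x = (SOME y. y \<in> \<beta> `` {x})"

lemma rho_b: "(x, rho x) \<in> \<beta>"
proof -
  have "x \<in> \<beta> `` {x}" using bref by simp
  then have "rho x \<in> \<beta> `` {x}" unfolding rho_def by (rule someI)
  then show ?thesis by simp
qed

lemma rho_eq: "(x, y) \<in> \<beta> \<Longrightarrow> rho x = rho y"
  unfolding rho_def using equiv_class_eq[OF equivb] by simp

lemma Dr_Bs[simp]: "D x (rho x) ob \<in> Bs"
  by (rule Bs_diff[OF bsym[OF rho_b]])

lemma unroll:
  assumes wf: "gwf ar C"
  shows "v < length C \<Longrightarrow> \<exists>g. (\<forall>w l. g w l \<in> Bs) \<and> (\<forall>vs. isval F C vs \<longrightarrow>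
     cls (D (vs ! v) (rho (vs ! v)) ob) = finprod G (\<lambda>w. cls (g w (loc rho C vs w))) {..<length C})"
proof (induction v rule: less_induct)
  case (less v)
  interpret Gi: comm_group G by (rule G_cg)
  define N where "N = length C"
  show ?case
  proof (cases "\<exists>f args. C ! v = Gt f args")
    case False
    define g where "g w l = (if w = v then D (hd l) (rho (hd l)) ob else ob)" for w l
    have gB: "g w l \<in> Bs" for w l unfolding g_def by simp
    have "cls (D (vs ! v) (rho (vs ! v)) ob) = finprod G (\<lambda>w. cls (g w (loc rho C vs w))) {..<length C}" for vs
    proof -
      have lv: "loc rho C vs v = [vs ! v]" using False unfolding loc_def by (cases "C ! v") auto
      have "finprod G (\<lambda>w. cls (g w (loc rho C vs w))) {..<length C} =
          finprod G (\<lambda>w. if w = v then cls (D (vs ! v) (rho (vs ! v)) ob) else \<one>\<^bsub>G\<^esub>) {..<length C}"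
        by (rule Gi.finprod_cong') (auto simp: g_def lv G_one)
      also have "\<dots> = cls (D (vs ! v) (rho (vs ! v)) ob)"
        using Gi.finprod_singleton_swap[of v "{..<length C}" "\<lambda>w. cls (D (vs ! v) (rho (vs ! v)) ob)"] less.prems
        by simp
      finally show ?thesis by simp
    qed
    then show ?thesis using gB by blast
  next
    case True
    then obtain f args where Cv: "C ! v = Gt f args" by blast
    have la: "length args = ar f" and ak: "\<And>k. k \<in> set args \<Longrightarrow> k < v"
      using wf less.prems Cv unfolding gwf_def by force+
    have "\<forall>i\<in>{..<ar f}. \<exists>g. (\<forall>w l. g w l \<in> Bs) \<and> (\<forall>vs. isval F C vs \<longrightarrow>
       cls (D (vs ! (args ! i)) (rho (vs ! (args ! i))) ob) = finprod G (\<lambda>w. cls (g w (loc rho C vs w))) {..<length C})"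
    proof
      fix i assume "i \<in> {..<ar f}"
      then have "args ! i \<in> set args" using la by simp
      then have "args ! i < v" by (rule ak)
      then show "\<exists>g. (\<forall>w l. g w l \<in> Bs) \<and> (\<forall>vs. isval F C vs \<longrightarrow>
       cls (D (vs ! (args ! i)) (rho (vs ! (args ! i))) ob) = finprod G (\<lambda>w. cls (g w (loc rho C vs w))) {..<length C})"
        using less.IH less.prems by simp
    qed
    from bchoice[OF this] obtain gs where gs: "\<forall>i\<in>{..<ar f}. (\<forall>w l. gs i w l \<in> Bs) \<and> (\<forall>vs. isval F C vs \<longrightarrow>
       cls (D (vs ! (args ! i)) (rho (vs ! (args ! i))) ob) = finprod G (\<lambda>w. cls (gs i w (loc rho C vs w))) {..<length C})"
      by blast
    define h where "h l = D (F f l) (rho (F f l)) ob" for l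
    have hB: "h l \<in> Bs" for l unfolding h_def by (rule Bs_diff[OF bsym[OF rho_b]])
    define Z where "Z w l = cls (if w = v then h l else ob) \<otimes>\<^bsub>G\<^esub> finprod G (\<lambda>i. cls (lam f i (gs i w l))) {..<ar f}" for w l
    have Zc: "Z w l \<in> cls ` Bs" for w l
    proof -
      have "Z w l \<in> carrier G" unfolding Z_def using gs hB
        by (intro Gi.m_closed Gi.finprod_closed) (auto simp: lam_Bs)
      then show ?thesis by (simp add: G_carrier)
    qed
    define g where "g w l = (SOME y. y \<in> Bs \<and> cls y = Z w l)" for w l
    have g: "g w l \<in> Bs \<and> cls (g w l) = Z w l" for w l
    proof -
      from Zc obtain y where "y \<in> Bs" "Z w l = cls y" by blast
      then have "\<exists>y. y \<in> Bs \<and> cls y = Z w l" by blast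
      then show ?thesis unfolding g_def by (rule someI_ex)
    qed
    have "cls (D (vs ! v) (rho (vs ! v)) ob) = finprod G (\<lambda>w. cls (g w (loc rho C vs w))) {..<length C}"
      if vs: "isval F C vs" for vs
    proof -
      define ys where "ys = map (\<lambda>k. vs ! k) args"
      define rs where "rs = map rho ys"
      have vv: "vs ! v = F f ys" using vs less.prems Cv unfolding isval_def ys_def by force
      have lv: "loc rho C vs v = rs" unfolding loc_def rs_def ys_def Cv by simp
      have yl: "length ys = ar f" "length rs = ar f" using la by (simp_all add: ys_def rs_def)
      have yr: "(ys ! i, rs ! i) \<in> \<beta>" if "i < ar f" for i using that yl by (simp add: rs_def rho_b)
      have rb: "(rs ! i, ys ! i) \<in> \<beta>" if "i < ar f" for i using yr[OF that] by (rule bsym)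
      have FF: "(F f rs, F f ys) \<in> \<beta>" by (rule F_cong[OF cb yl(2) yl(1) rb])
      define R where "R = rho (F f ys)"
      have R: "R = rho (F f rs)" unfolding R_def by (rule rho_eq[OF bsym[OF FF]])
      have Rr: "(R, F f rs) \<in> \<beta>" unfolding R by (rule bsym[OF rho_b])
      have "cls (D (F f ys) R ob) = cls (D (F f rs) R ob) \<otimes>\<^bsub>G\<^esub> cls (D (F f ys) (F f rs) ob)"
        using E5[OF Rr FF] by (simp add: mult_cls cls_eq)
      also have "cls (D (F f rs) R ob) = cls (h rs)" unfolding h_def R ..
      also have "cls (D (F f ys) (F f rs) ob) = finprod G (\<lambda>i. cls (lam f i (D (ys ! i) (rs ! i) ob))) {..<ar f}"
        by (rule tele[OF yl(2) yl(1) rb])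
      also have "\<dots> = finprod G (\<lambda>i. finprod G (\<lambda>w. cls (lam f i (gs i w (loc rho C vs w)))) {..<length C}) {..<ar f}"
      proof (rule Gi.finprod_cong')
        fix i assume i: "i \<in> {..<ar f}"
        have e1: "ys ! i = vs ! (args ! i)" "rs ! i = rho (vs ! (args ! i))" using i yl la
          by (simp_all add: ys_def rs_def)
        have "cls (lam f i (D (ys ! i) (rs ! i) ob)) = lamh f i (cls (D (ys ! i) (rs ! i) ob))"
          by (simp add: lamh_cls)
        also have "\<dots> = lamh f i (finprod G (\<lambda>w. cls (gs i w (loc rho C vs w))) {..<length C})"
          using gs i vs unfolding e1 by simp
        also have "\<dots> = finprod G (\<lambda>w. cls (lam f i (gs i w (loc rho C vs w)))) {..<length C}"
          using i gs by (intro lamh_finprod) auto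
        finally show "cls (lam f i (D (ys ! i) (rs ! i) ob)) = finprod G (\<lambda>w. cls (lam f i (gs i w (loc rho C vs w)))) {..<length C}" .
      qed (use gs in \<open>auto simp: lam_Bs intro!: Gi.finprod_closed\<close>)
      also have "\<dots> = finprod G (\<lambda>w. finprod G (\<lambda>i. cls (lam f i (gs i w (loc rho C vs w)))) {..<ar f}) {..<length C}"
      proof -
        define X where "X i w = (if i < ar f then cls (lam f i (gs i w (loc rho C vs w))) else \<one>\<^bsub>G\<^esub>)" for i w
        have Xc: "X i w \<in> carrier G" for i w using gs by (auto simp: X_def lam_Bs)
        have "finprod G (\<lambda>i. finprod G (\<lambda>w. X i w) {..<length C}) {..<ar f} = finprod G (\<lambda>w. finprod G (\<lambda>i. X i w) {..<ar f}) {..<length C}"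
          by (rule finprod_exch) (auto simp: Xc)
        moreover have "finprod G (\<lambda>i. finprod G (\<lambda>w. X i w) {..<length C}) {..<ar f} = finprod G (\<lambda>i. finprod G (\<lambda>w. cls (lam f i (gs i w (loc rho C vs w)))) {..<length C}) {..<ar f}"
          by (intro Gi.finprod_cong' refl) (use gs in \<open>auto simp: X_def lam_Bs intro!: Gi.finprod_closed\<close>)
        moreover have "finprod G (\<lambda>w. finprod G (\<lambda>i. X i w) {..<ar f}) {..<length C} = finprod G (\<lambda>w. finprod G (\<lambda>i. cls (lam f i (gs i w (loc rho C vs w)))) {..<ar f}) {..<length C}"
          by (intro Gi.finprod_cong' refl) (use gs in \<open>auto simp: X_def lam_Bs intro!: Gi.finprod_closed\<close>)
        ultimately show ?thesis by simp
      qed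
      finally have A: "cls (D (vs ! v) (rho (vs ! v)) ob) = cls (h rs) \<otimes>\<^bsub>G\<^esub> finprod G (\<lambda>w. finprod G (\<lambda>i. cls (lam f i (gs i w (loc rho C vs w)))) {..<ar f}) {..<length C}"
        unfolding vv R_def .
      have "finprod G (\<lambda>w. cls (g w (loc rho C vs w))) {..<length C} = finprod G (\<lambda>w. Z w (loc rho C vs w)) {..<length C}"
        using g by simp
      also have "\<dots> = finprod G (\<lambda>w. if w = v then cls (h (loc rho C vs w)) else \<one>\<^bsub>G\<^esub>) {..<length C} \<otimes>\<^bsub>G\<^esub>
          finprod G (\<lambda>w. finprod G (\<lambda>i. cls (lam f i (gs i w (loc rho C vs w)))) {..<ar f}) {..<length C}"
      proof -
        have "(\<lambda>w. Z w (loc rho C vs w)) = (\<lambda>w. (if w = v then cls (h (loc rho C vs w)) else \<one>\<^bsub>G\<^esub>) \<otimes>\<^bsub>G\<^esub> finprod G (\<lambda>i. cls (lam f i (gs i w (loc rho C vs w)))) {..<ar f})"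
          by (rule ext) (simp add: Z_def G_one if_distrib[of cls])
        then show ?thesis using gs hB
          by (simp add: Gi.finprod_multf Pi_def lam_Bs Gi.finprod_closed)
      qed
      also have "finprod G (\<lambda>w. if w = v then cls (h (loc rho C vs w)) else \<one>\<^bsub>G\<^esub>) {..<length C} = cls (h rs)"
        using Gi.finprod_singleton_swap[of v "{..<length C}" "\<lambda>w. cls (h (loc rho C vs w))"] less.prems hB lv
        by (simp add: Pi_def)
      finally show ?thesis using A by simp
    qed
    then show ?thesis using g by blast
  qed
qed

lemma level_det:
  assumes wf: "gwf ar C"
  shows "\<exists>g. \<forall>vs vs'. isval F C vs \<longrightarrow> isval F C vs' \<longrightarrow> (\<forall>v<length C. (vs ! v, vs' ! v) \<in> \<beta> \<longrightarrow>
     (\<forall>a::'a. card {w. w < length C \<and> g v w (loc rho C vs w) = a} mod card (carrier G) =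
          card {w. w < length C \<and> g v w (loc rho C vs' w) = a} mod card (carrier G)) \<longrightarrow>
     (vs ! v, vs' ! v) \<in> \<delta>)"
proof -
  have "\<forall>v\<in>{..<length C}. \<exists>g. (\<forall>w l. g w l \<in> Bs) \<and> (\<forall>vs. isval F C vs \<longrightarrow>
     cls (D (vs ! v) (rho (vs ! v)) ob) = finprod G (\<lambda>w. cls (g w (loc rho C vs w))) {..<length C})"
    using unroll[OF wf] by blast
  from bchoice[OF this] obtain g where g: "\<forall>v\<in>{..<length C}. (\<forall>w l. g v w l \<in> Bs) \<and> (\<forall>vs. isval F C vs \<longrightarrow>
     cls (D (vs ! v) (rho (vs ! v)) ob) = finprod G (\<lambda>w. cls (g v w (loc rho C vs w))) {..<length C})"
    by blast
  have main: "(vs ! v, vs' ! v) \<in> \<delta>"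
    if vs: "isval F C vs" and vs': "isval F C vs'" and v: "v < length C"
      and b: "(vs ! v, vs' ! v) \<in> \<beta>"
      and cnt: "\<forall>a. card {w. w < length C \<and> g v w (loc rho C vs w) = a} mod card (carrier G) =
          card {w. w < length C \<and> g v w (loc rho C vs' w) = a} mod card (carrier G)" for vs vs' v
  proof -
    define R where "R = rho (vs ! v)"
    have R': "R = rho (vs' ! v)" unfolding R_def by (rule rho_eq[OF b])
    have gB: "\<forall>w l. g v w l \<in> Bs" using g v by blast
    have "cls (D (vs ! v) R ob) = finprod G (\<lambda>w. cls (g v w (loc rho C vs w))) {..<length C}"
      using g v vs unfolding R_def by blast
    also have "\<dots> = finprod G (\<lambda>a. cls a [^]\<^bsub>G\<^esub> (card {w. w < length C \<and> g v w (loc rho C vs w) = a} mod card (carrier G))) Bs"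
      by (rule count_prod) (use gB in blast)
    also have "\<dots> = finprod G (\<lambda>a. cls a [^]\<^bsub>G\<^esub> (card {w. w < length C \<and> g v w (loc rho C vs' w) = a} mod card (carrier G))) Bs"
      using cnt by simp
    also have "\<dots> = finprod G (\<lambda>w. cls (g v w (loc rho C vs' w))) {..<length C}"
      by (rule count_prod[symmetric]) (use gB in blast)
    also have "\<dots> = cls (D (vs' ! v) R ob)"
      using g v vs' unfolding R' by simp
    finally have "(D (vs ! v) R ob, D (vs' ! v) R ob) \<in> \<delta>" by (simp add: cls_eq)
    then have 1: "(D (D (vs ! v) R ob) ob R, D (D (vs' ! v) R ob) ob R) \<in> \<delta>"
      by (rule D_cong[OF cd _ dref dref])
    have 2: "(D (D (vs ! v) R ob) ob R, vs ! v) \<in> \<delta>" using E4 rho_b unfolding R_def by blast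
    have 3: "(D (D (vs' ! v) R ob) ob R, vs' ! v) \<in> \<delta>" using E4 rho_b unfolding R' by blast
    show "(vs ! v, vs' ! v) \<in> \<delta>" using 1 2 3 dtr dsym by blast
  qed
  show ?thesis using main by blast
qed

end

lemma level_exists:
  fixes ar :: "'f \<Rightarrow> nat" and F :: "'f \<Rightarrow> 'a::finite list \<Rightarrow> 'a"
  assumes "d \<in> clo ar F" "\<And>x y. d (tup3 x y y) = x" "\<And>x y. d (tup3 y y x) = x"
    "is_cong ar F \<beta>" "is_cong ar F \<delta>" "\<delta> \<subseteq> \<beta>" "centralizes ar F UNIV \<beta> \<delta>"
  shows "\<exists>\<rho> M. M > 0 \<and> (\<forall>x. (x, \<rho> x) \<in> \<beta>) \<and> (\<forall>x y. (x, y) \<in> \<beta> \<longrightarrow> \<rho> x = \<rho> y) \<and>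
    (\<forall>C. gwf ar C \<longrightarrow> (\<exists>g. \<forall>vs vs'. isval F C vs \<longrightarrow> isval F C vs' \<longrightarrow> (\<forall>v<length C. (vs ! v, vs' ! v) \<in> \<beta> \<longrightarrow>
     (\<forall>a::'a. card {w. w < length C \<and> g v w (loc \<rho> C vs w) = a} mod M =
          card {w. w < length C \<and> g v w (loc \<rho> C vs' w) = a} mod M) \<longrightarrow>
     (vs ! v, vs' ! v) \<in> \<delta>)))"
proof -
  interpret calg ar F d \<beta> \<delta> undefined using assms by unfold_locales auto
  show ?thesis using card_pos rho_b rho_eq level_det by blast
qed


lemma is_cong_UNIV: "is_cong ar F UNIV"
  unfolding is_cong_def by (auto simp: equiv_def refl_on_def sym_def trans_def)

lemma centralizes_UNIV: "centralizes ar F \<alpha> \<beta> UNIV"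
  unfolding centralizes_def by auto

lemma is_cong_Inter:
  assumes "S \<noteq> {}" "\<And>\<delta>. \<delta> \<in> S \<Longrightarrow> is_cong ar F \<delta>"
  shows "is_cong ar F (\<Inter>S)"
proof -
  have e: "\<And>\<delta>. \<delta> \<in> S \<Longrightarrow> equiv UNIV \<delta>" using assms(2) unfolding is_cong_def by blast
  have c: "\<And>\<delta> f xs ys. \<delta> \<in> S \<Longrightarrow> length xs = ar f \<Longrightarrow> length ys = ar f \<Longrightarrow>
        (\<forall>i<ar f. (xs ! i, ys ! i) \<in> \<delta>) \<Longrightarrow> (F f xs, F f ys) \<in> \<delta>"
    using assms(2) unfolding is_cong_def by blast
  have "equiv UNIV (\<Inter>S)"
  proof (rule equivI)
    show "refl_on UNIV (\<Inter>S)" using e by (auto simp: refl_on_def equiv_def)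
    show "sym (\<Inter>S)" unfolding sym_def
    proof (intro allI impI InterI)
      fix x y \<delta> assume "(x, y) \<in> \<Inter>S" "\<delta> \<in> S"
      then show "(y, x) \<in> \<delta>" using e[of \<delta>] unfolding equiv_def sym_def by blast
    qed
    show "trans (\<Inter>S)" unfolding trans_def
    proof (intro allI impI InterI)
      fix x y z \<delta> assume "(x, y) \<in> \<Inter>S" "(y, z) \<in> \<Inter>S" "\<delta> \<in> S"
      then show "(x, z) \<in> \<delta>" using e[of \<delta>] unfolding equiv_def trans_def by blast
    qed
  qed auto
  moreover have "\<forall>f xs ys. length xs = ar f \<longrightarrow> length ys = ar f \<longrightarrow>
        (\<forall>i<ar f. (xs ! i, ys ! i) \<in> \<Inter>S) \<longrightarrow> (F f xs, F f ys) \<in> \<Inter>S"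
  proof (intro allI impI InterI)
    fix f xs ys \<delta> assume "length xs = ar f" "length ys = ar f" "\<forall>i<ar f. (xs ! i, ys ! i) \<in> \<Inter>S" "\<delta> \<in> S"
    then show "(F f xs, F f ys) \<in> \<delta>" using c[of \<delta> xs f ys] by blast
  qed
  ultimately show ?thesis unfolding is_cong_def by blast
qed

lemma commutator_cong: "is_cong ar F (commutator ar F \<alpha> \<beta>)"
  unfolding commutator_def
  by (rule is_cong_Inter) (use is_cong_UNIV[of ar F] centralizes_UNIV[of ar F \<alpha> \<beta>] in auto)

lemma commutator_cent: "centralizes ar F \<alpha> \<beta> (commutator ar F \<alpha> \<beta>)"
  unfolding commutator_def centralizes_def by blast

lemma cong_cent_self:
  assumes "is_cong ar F \<beta>"
  shows "centralizes ar F UNIV \<beta> \<beta>"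
  unfolding centralizes_def
proof (intro ballI allI impI)
  fix t and a b c d :: "nat \<Rightarrow> _" assume t: "t \<in> clo ar F" and cd: "\<forall>i. (c i, d i) \<in> \<beta>"
  have "\<And>i. (mrg b c i, mrg b d i) \<in> \<beta>"
    using cd is_cong_refl[OF assms] by (simp add: mrg_def)
  then show "(t (mrg b c), t (mrg b d)) \<in> \<beta>" by (rule clo_resp[OF t assms])
qed

lemma commutator_sub: "is_cong ar F \<beta> \<Longrightarrow> commutator ar F UNIV \<beta> \<subseteq> \<beta>"
  unfolding commutator_def using cong_cent_self by blast

lemma lcs_cong: "is_cong ar F (lcs ar F j)"
  by (cases j) (simp_all add: is_cong_UNIV commutator_cong)

lemma lcs_sub: "lcs ar F (Suc j) \<subseteq> lcs ar F j"
  by (simp add: commutator_sub lcs_cong)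

lemma lcs_cent: "centralizes ar F UNIV (lcs ar F j) (lcs ar F (Suc j))"
  by (simp add: commutator_cent)

lemma foldl_app:
  assumes f: "\<And>vs nd. f vs nd = vs @ [\<phi> vs nd]"
  shows "length (foldl f [] C) = length C \<and> (\<forall>j<length C. foldl f [] C ! j = \<phi> (take j (foldl f [] C)) (C ! j))"
proof (induction C rule: rev_induct)
  case Nil
  then show ?case by simp
next
  case (snoc x C)
  then show ?case by (auto simp: f nth_append less_Suc_eq)
qed

fun enc :: "bool list \<Rightarrow> nat" where
  "enc [] = 0"
| "enc (x # xs) = (if x then 1 else 0) + 2 * enc xs"

fun wl :: "nat list \<Rightarrow> nat list" where
  "wl [] = []"
| "wl (w # ws) = w # wl ws @ wl ws"

lemma sum_wl: "sum_list (map (\<lambda>k. if vals ! k then 1 else 0) (wl ws)) = enc (map (\<lambda>k. vals ! k) ws)"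
  by (induction ws) auto

lemma length_wl: "length (wl ws) + 1 = 2 ^ length ws"
  by (induction ws) auto

lemma set_wl: "set (wl ws) = set ws"
  by (induction ws) auto

lemma enc_lt: "enc xs < 2 ^ length xs"
  by (induction xs) auto

lemma enc_inj: "length xs = length ys \<Longrightarrow> enc xs = enc ys \<Longrightarrow> xs = ys"
proof (induction xs arbitrary: ys)
  case Nil
  then show ?case by simp
next
  case (Cons x xs)
  then obtain y ys' where ys: "ys = y # ys'" by (cases ys) auto
  from Cons.prems ys have e: "(if x then 1 else 0) + 2 * enc xs = (if y then 1 else 0) + 2 * enc ys'" by simp
  then have "x = y" by (cases x; cases y; simp; presburger)
  with e have "enc xs = enc ys'" by simp
  with Cons.IH[of ys'] Cons.prems ys \<open>x = y\<close> show ?case by simp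
qed

lemma fold_max_le: "(\<forall>x\<in>set xs. x \<le> (D::nat)) \<Longrightarrow> a \<le> D \<Longrightarrow> fold max xs a \<le> D"
  by (induction xs arbitrary: a) auto

lemma sum_list_le: "(\<forall>x\<in>set xs. f x \<le> (B::nat)) \<Longrightarrow> sum_list (map f xs) \<le> length xs * B"
  by (induction xs) auto

lemma sum_list_ind: "sum_list (map (\<lambda>w. if P w then 1 else 0) [0..<N]) = card {w. w < N \<and> P w}"
proof (induction N)
  case 0 then show ?case by simp
next
  case (Suc N)
  have "{w. w < Suc N \<and> P w} = {w. w < N \<and> P w} \<union> (if P N then {N} else {})"
    by (auto simp: less_Suc_eq)
  then show ?case using Suc by (auto simp: card_insert_if)
qed


datatype 'a lab = LIn nat | LW nat nat 'a | LI nat nat nat 'a | LC nat nat 'a nat | LOut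

definition AV :: "('f \<Rightarrow> 'a list \<Rightarrow> 'a) \<Rightarrow> (bool \<Rightarrow> 'a) \<Rightarrow> ('f, 'a) cnode list \<Rightarrow> bool list \<Rightarrow> 'a list" where
  "AV F \<iota> C b = foldl (circ_step F (\<lambda>i. \<iota> (b ! i))) [] C"

lemma AV_len: "length (AV F \<iota> C b) = length C"
  unfolding AV_def
  by (rule conjunct1[OF foldl_app[where \<phi>="\<lambda>vals nd. case nd of In i \<Rightarrow> \<iota> (b ! i) | Cst a \<Rightarrow> a
        | Gt f args \<Rightarrow> F f (map (\<lambda>k. vals ! k) args)"]]) (simp add: circ_step_def)

lemma AV_nth:
  assumes "gwf ar C" "j < length C"
  shows "AV F \<iota> C b ! j = (case C ! j of In i \<Rightarrow> \<iota> (b ! i) | Cst a \<Rightarrow> a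
        | Gt f args \<Rightarrow> F f (map (\<lambda>k. AV F \<iota> C b ! k) args))"
proof -
  have "AV F \<iota> C b ! j = (case C ! j of In i \<Rightarrow> \<iota> (b ! i) | Cst a \<Rightarrow> a
        | Gt f args \<Rightarrow> F f (map (\<lambda>k. take j (AV F \<iota> C b) ! k) args))"
    unfolding AV_def
    using conjunct2[OF foldl_app[where \<phi>="\<lambda>vals nd. case nd of In i \<Rightarrow> \<iota> (b ! i) | Cst a \<Rightarrow> a
        | Gt f args \<Rightarrow> F f (map (\<lambda>k. vals ! k) args)" and f="circ_step F (\<lambda>i. \<iota> (b ! i))" and C=C]] assms(2)
    by (simp add: circ_step_def)
  moreover have "C ! j = Gt f args \<Longrightarrow> k \<in> set args \<Longrightarrow> k < j" for f args k
    using assms unfolding gwf_def by force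
  then have "C ! j = Gt f args \<Longrightarrow> map (\<lambda>k. take j (AV F \<iota> C b) ! k) args = map (\<lambda>k. AV F \<iota> C b ! k) args" for f args
    by (intro map_cong refl) auto
  ultimately show ?thesis by (cases "C ! j") auto
qed

lemma AV_isval: "gwf ar C \<Longrightarrow> isval F C (AV F \<iota> C b)"
  unfolding isval_def by (auto simp: AV_len AV_nth split: cnode.split)

lemma wf_gwf: "wf_circ ar n C \<Longrightarrow> gwf ar C"
  unfolding wf_circ_def gwf_def
proof (intro allI impI)
  fix j assume "C \<noteq> [] \<and> (\<forall>j<length C. case C ! j of In i \<Rightarrow> i < n | Cst a \<Rightarrow> True
       | Gt f args \<Rightarrow> length args = ar f \<and> (\<forall>k\<in>set args. k < j))" "j < length C"
  then show "case C ! j of Gt f args \<Rightarrow> length args = ar f \<and> (\<forall>k\<in>set args. k < j) | _ \<Rightarrow> True"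
    by (cases "C ! j") auto
qed

locale construct =
  fixes ar :: "'f \<Rightarrow> nat" and F :: "'f \<Rightarrow> 'a::finite list \<Rightarrow> 'a"
    and K :: nat and RHO :: "nat \<Rightarrow> 'a \<Rightarrow> 'a" and MM :: "nat \<Rightarrow> nat"
    and GG :: "nat \<Rightarrow> ('f, 'a) cnode list \<Rightarrow> nat \<Rightarrow> nat \<Rightarrow> 'a list \<Rightarrow> 'a"
    and m :: nat and as :: "'a list" and kmax :: nat and \<iota> :: "bool \<Rightarrow> 'a" and S :: "'a set"
  assumes lcsK: "lcs ar F K = Id"
    and MMpos: "\<And>j. j < K \<Longrightarrow> MM j > 0"
    and rho2: "\<And>j x y. j < K \<Longrightarrow> (x, y) \<in> lcs ar F j \<Longrightarrow> RHO j x = RHO j y"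
    and GGdet: "\<And>j C vs vs' v. j < K \<Longrightarrow> gwf ar C \<Longrightarrow> isval F C vs \<Longrightarrow> isval F C vs' \<Longrightarrow> v < length C \<Longrightarrow>
        (vs ! v, vs' ! v) \<in> lcs ar F j \<Longrightarrow>
        (\<forall>a::'a. card {w. w < length C \<and> GG j C v w (loc (RHO j) C vs w) = a} mod MM j =
             card {w. w < length C \<and> GG j C v w (loc (RHO j) C vs' w) = a} mod MM j) \<Longrightarrow>
        (vs ! v, vs' ! v) \<in> lcs ar F (Suc j)"
    and as: "set as = UNIV"
    and mdvd: "\<And>j. j < K \<Longrightarrow> MM j dvd m"
    and kbound: "2 ^ kmax \<le> m"
    and kar: "\<And>f. length as * ar f \<le> kmax"
    and kMM: "\<And>j. j < K \<Longrightarrow> length as + length as * MM j \<le> kmax"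
    and k1: "1 \<le> kmax" and kp: "length as \<le> kmax"
begin

abbreviation "N C \<equiv> length C"
abbreviation "AVb C b \<equiv> AV F \<iota> C b"

definition semL :: "('f, 'a) cnode list \<Rightarrow> bool list \<Rightarrow> 'a lab \<Rightarrow> bool" where
  "semL C b l = (case l of LIn i \<Rightarrow> b ! i
     | LW j v a \<Rightarrow> (AVb C b ! v, a) \<in> lcs ar F j
     | LI j v w a \<Rightarrow> GG j C v w (loc (RHO j) C (AVb C b) w) = a
     | LC j v a c \<Rightarrow> card {w. w < length C \<and> GG j C v w (loc (RHO j) C (AVb C b) w) = a} mod MM j = c
     | LOut \<Rightarrow> AVb C b ! (length C - 1) \<in> S)"

definition detsL :: "('f, 'a) cnode list \<Rightarrow> 'a lab \<Rightarrow> 'a lab list" where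
  "detsL C l = (case l of
       LW j v a \<Rightarrow> (if j = 0 then [] else map (\<lambda>r. LW (j - 1) v r) as @
            concat (map (\<lambda>a'. map (\<lambda>c. LC (j - 1) v a' c) [0..<MM (j - 1)]) as))
     | LI j v w a \<Rightarrow> (case C ! w of Gt f args \<Rightarrow> concat (map (\<lambda>k. map (\<lambda>r. LW j k r) as) args)
            | In i \<Rightarrow> [LIn i] | Cst _ \<Rightarrow> [])
     | LOut \<Rightarrow> map (\<lambda>r. LW K (length C - 1) r) as
     | _ \<Rightarrow> [])"

definition isdet :: "'a lab \<Rightarrow> bool" where
  "isdet l = (case l of LIn _ \<Rightarrow> False | LC _ _ _ _ \<Rightarrow> False | _ \<Rightarrow> True)"

definition argsL :: "('f, 'a) cnode list \<Rightarrow> 'a lab \<Rightarrow> 'a lab list" where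
  "argsL C l = (case l of LIn _ \<Rightarrow> [] | LC j v a c \<Rightarrow> map (\<lambda>w. LI j v w a) [0..<length C] | _ \<Rightarrow> detsL C l)"

definition rank :: "'a lab \<Rightarrow> nat" where
  "rank l = (case l of LIn _ \<Rightarrow> 0 | LW j _ _ \<Rightarrow> 3*j+1 | LI j _ _ _ \<Rightarrow> 3*j+2 | LC j _ _ _ \<Rightarrow> 3*j+3 | LOut \<Rightarrow> 3*K+2)"

definition labs0 :: "nat \<Rightarrow> ('f, 'a) cnode list \<Rightarrow> 'a lab list" where
  "labs0 n C = map LIn [0..<n]
     @ concat (map (\<lambda>j. concat (map (\<lambda>v. map (LW j v) as) [0..<length C])) [0..<Suc K])
     @ concat (map (\<lambda>j. concat (map (\<lambda>v. concat (map (\<lambda>w. map (LI j v w) as) [0..<length C])) [0..<length C])) [0..<K])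
     @ concat (map (\<lambda>j. concat (map (\<lambda>v. concat (map (\<lambda>a. map (LC j v a) [0..<MM j]) as)) [0..<length C])) [0..<K])"

definition labs :: "nat \<Rightarrow> ('f, 'a) cnode list \<Rightarrow> 'a lab list" where
  "labs n C = sort_key rank (labs0 n C) @ [LOut]"

definition pos :: "nat \<Rightarrow> ('f, 'a) cnode list \<Rightarrow> 'a lab \<Rightarrow> nat" where
  "pos n C l = (SOME i. i < length (labs n C) \<and> labs n C ! i = l)"

definition Tset :: "nat \<Rightarrow> ('f, 'a) cnode list \<Rightarrow> 'a lab \<Rightarrow> nat set" where
  "Tset n C l = {enc (map (semL C b') (detsL C l)) | b'. length b' = n \<and> semL C b' l}"

definition nodeOf :: "nat \<Rightarrow> ('f, 'a) cnode list \<Rightarrow> 'a lab \<Rightarrow> mnode" where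
  "nodeOf n C l = (case l of LIn i \<Rightarrow> MIn i
     | LC j v a c \<Rightarrow> MGate {s. s mod MM j = c} (map (pos n C) (argsL C l))
     | _ \<Rightarrow> MGate (Tset n C l) (wl (map (pos n C) (detsL C l))))"

definition Circ :: "nat \<Rightarrow> ('f, 'a) cnode list \<Rightarrow> mnode list" where
  "Circ n C = map (nodeOf n C) (labs n C)"

lemma in_labs0: "l \<in> set (labs0 n C) \<longleftrightarrow> (case l of LIn i \<Rightarrow> i < n | LW j v a \<Rightarrow> j \<le> K \<and> v < length C
   | LI j v w a \<Rightarrow> j < K \<and> v < length C \<and> w < length C | LC j v a c \<Rightarrow> j < K \<and> v < length C \<and> c < MM j
   | LOut \<Rightarrow> False)"
  by (cases l) (auto simp: labs0_def as image_iff less_Suc_eq_le)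

lemma in_labs: "l \<in> set (labs n C) \<longleftrightarrow> l \<in> set (labs0 n C) \<or> l = LOut"
  by (auto simp: labs_def)

lemma rank_labs0: "l \<in> set (labs0 n C) \<Longrightarrow> rank l \<le> 3 * K + 1"
  by (cases l) (auto simp: in_labs0 rank_def)

lemma args_ok:
  assumes wf: "wf_circ ar n C" and l: "l \<in> set (labs n C)" and l': "l' \<in> set (argsL C l)"
  shows "l' \<in> set (labs n C) \<and> rank l' < rank l"
proof (cases l)
  case (LIn i) then show ?thesis using l' by (simp add: argsL_def)
next
  case (LW j v a)
  then show ?thesis using l l' by (cases j) (auto simp: argsL_def detsL_def in_labs in_labs0 rank_def as)
next
  case (LI j v w a)
  have jv: "j < K" "v < length C" "w < length C" using l LI by (auto simp: in_labs in_labs0)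
  show ?thesis
  proof (cases "C ! w")
    case (In i)
    have "i < n" using wf jv In unfolding wf_circ_def by force
    then show ?thesis using l' LI In jv by (auto simp: argsL_def detsL_def in_labs in_labs0 rank_def)
  next
    case (Cst a0)
    then show ?thesis using l' LI by (auto simp: argsL_def detsL_def)
  next
    case (Gt f args)
    have "\<And>k. k \<in> set args \<Longrightarrow> k < w" using wf jv Gt unfolding wf_circ_def by force
    then have "\<And>k. k \<in> set args \<Longrightarrow> k < length C" using jv(3) less_trans by blast
    then show ?thesis using l' LI Gt jv by (auto simp: argsL_def detsL_def in_labs in_labs0 rank_def)
  qed
next
  case (LC j v a c)
  then show ?thesis using l l' by (auto simp: argsL_def in_labs in_labs0 rank_def)
next
  case LOut
  have "length C > 0" using wf unfolding wf_circ_def by auto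
  then show ?thesis using l' LOut by (auto simp: argsL_def detsL_def in_labs in_labs0 rank_def)
qed

lemma pos_ok: "l \<in> set (labs n C) \<Longrightarrow> pos n C l < length (labs n C) \<and> labs n C ! pos n C l = l"
  unfolding pos_def by (rule someI_ex) (simp add: in_set_conv_nth)

lemma pos_lt:
  assumes j: "j < length (labs n C)" and l': "l' \<in> set (labs n C)" and r: "rank l' < rank (labs n C ! j)"
  shows "pos n C l' < j"
proof -
  define Sl where "Sl = sort_key rank (labs0 n C)"
  have L: "labs n C = Sl @ [LOut]" by (simp add: labs_def Sl_def)
  have p: "pos n C l' < length (labs n C)" "labs n C ! pos n C l' = l'" using pos_ok[OF l'] by auto
  have l'0: "l' \<noteq> LOut"
  proof
    assume "l' = LOut"
    have "labs n C ! j \<in> set (labs n C)" using j by simp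
    then have "rank (labs n C ! j) \<le> 3 * K + 2"
    proof (cases "labs n C ! j \<in> set (labs0 n C)")
      case True then show ?thesis using rank_labs0[OF True] by simp
    next
      case False then show ?thesis using \<open>labs n C ! j \<in> set (labs n C)\<close> by (auto simp: in_labs rank_def)
    qed
    with r \<open>l' = LOut\<close> show False by (simp add: rank_def)
  qed
  have ps: "pos n C l' < length Sl"
  proof (rule ccontr)
    assume "\<not> pos n C l' < length Sl"
    then have "pos n C l' = length Sl" using p(1) L by simp
    then have "labs n C ! pos n C l' = LOut" using L by simp
    with p(2) l'0 show False by simp
  qed
  show ?thesis
  proof (cases "j < length Sl")
    case True
    show ?thesis
    proof (rule ccontr)
      assume "\<not> pos n C l' < j"
      then have "j \<le> pos n C l'" by simp
      have so: "sorted (map rank Sl)" unfolding Sl_def by (rule sorted_sort_key)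
      have "rank (Sl ! j) \<le> rank (Sl ! pos n C l')"
        using sorted_nth_mono[OF so \<open>j \<le> pos n C l'\<close>] ps True by simp
      moreover have "Sl ! j = labs n C ! j" "Sl ! pos n C l' = l'" using True ps p L by (simp_all add: nth_append)
      ultimately show False using r by simp
    qed
  next
    case False
    then show ?thesis using ps by simp
  qed
qed

end


context construct begin

lemma len_concat_const: "length (concat (map (\<lambda>x. map (g x) ys) xs)) = length xs * length ys"
  by (induction xs) auto

lemma det_len:
  assumes wf: "wf_circ ar n C" and l: "l \<in> set (labs n C)" and d: "isdet l"
  shows "length (detsL C l) \<le> kmax"
proof (cases l)
  case (LW j v a)
  show ?thesis
  proof (cases j)
    case 0 then show ?thesis using LW by (simp add: detsL_def)
  next
    case (Suc j')
    have "j' < K" using l LW Suc by (auto simp: in_labs in_labs0)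
    have "length (concat (map (\<lambda>a'. map (\<lambda>c. LC j' v a' c) [0..<MM j']) as)) = length as * MM j'"
      by (simp add: len_concat_const)
    then show ?thesis using LW Suc kMM[OF \<open>j' < K\<close>] by (simp add: detsL_def)
  qed
next
  case (LI j v w a)
  have w: "w < length C" using l LI by (auto simp: in_labs in_labs0)
  show ?thesis
  proof (cases "C ! w")
    case (Gt f args)
    have "length args = ar f" using wf w Gt unfolding wf_circ_def by force
    then show ?thesis using kar[of f] LI Gt by (simp add: detsL_def len_concat_const mult.commute)
  qed (use LI k1 in \<open>auto simp: detsL_def\<close>)
next
  case LOut then show ?thesis using kp by (simp add: detsL_def)
qed (use d in \<open>auto simp: isdet_def\<close>)

lemma determ:
  assumes wf: "wf_circ ar n C" and l: "l \<in> set (labs n C)" and d: "isdet l"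
    and b: "length b = n" and b': "length b' = n"
    and eq: "map (semL C b) (detsL C l) = map (semL C b') (detsL C l)"
  shows "semL C b l = semL C b' l"
proof -
  have e: "\<And>x. x \<in> set (detsL C l) \<Longrightarrow> semL C b x = semL C b' x" using eq by (simp add: map_eq_conv)
  have gw: "gwf ar C" using wf by (rule wf_gwf)
  have iv: "isval F C (AVb C b)" "isval F C (AVb C b')" using AV_isval[OF gw] by auto
  have len: "length (AVb C b) = length C" "length (AVb C b') = length C" by (simp_all add: AV_len)
  show ?thesis
  proof (cases l)
    case (LW j v a)
    have jv: "j \<le> K" "v < length C" using l LW by (auto simp: in_labs in_labs0)
    show ?thesis
    proof (cases j)
      case 0 then show ?thesis using LW by (simp add: semL_def)
    next
      case (Suc j')
      have j': "j' < K" using jv Suc by simp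
      have lw: "semL C b (LW j' v r) = semL C b' (LW j' v r)" for r
        using e[of "LW j' v r"] LW Suc as by (simp add: detsL_def image_iff)
      have lc: "semL C b (LC j' v a' c) = semL C b' (LC j' v a' c)" if "c < MM j'" for a' c
        using e[of "LC j' v a' c"] LW Suc as that by (simp add: detsL_def image_iff)
      have "(AVb C b ! v, AVb C b ! v) \<in> lcs ar F j'" by (rule is_cong_refl[OF lcs_cong])
      then have "(AVb C b' ! v, AVb C b ! v) \<in> lcs ar F j'" using lw[of "AVb C b ! v"] by (simp add: semL_def)
      then have bb: "(AVb C b ! v, AVb C b' ! v) \<in> lcs ar F j'" by (rule is_cong_sym[OF lcs_cong])
      have cnt: "card {w. w < length C \<and> GG j' C v w (loc (RHO j') C (AVb C b) w) = a'} mod MM j' =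
             card {w. w < length C \<and> GG j' C v w (loc (RHO j') C (AVb C b') w) = a'} mod MM j'" for a'
        using lc[of "card {w. w < length C \<and> GG j' C v w (loc (RHO j') C (AVb C b) w) = a'} mod MM j'" a']
          MMpos[OF j'] by (simp add: semL_def)
      have "(AVb C b ! v, AVb C b' ! v) \<in> lcs ar F (Suc j')"
        by (rule GGdet[OF j' gw iv jv(2) bb]) (use cnt in blast)
      then have "(AVb C b ! v, a) \<in> lcs ar F (Suc j') \<longleftrightarrow> (AVb C b' ! v, a) \<in> lcs ar F (Suc j')"
        using is_cong_trans[OF lcs_cong] is_cong_sym[OF lcs_cong] by metis
      then show ?thesis using LW Suc by (simp add: semL_def)
    qed
  next
    case (LI j v w a)
    have jv: "j < K" "w < length C" using l LI by (auto simp: in_labs in_labs0)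
    have "loc (RHO j) C (AVb C b) w = loc (RHO j) C (AVb C b') w"
    proof (cases "C ! w")
      case (In i)
      have "b ! i = b' ! i" using e[of "LIn i"] LI In by (simp add: detsL_def semL_def)
      then show ?thesis using In AV_nth[OF gw jv(2)] by (simp add: loc_def)
    next
      case (Cst a0)
      then show ?thesis using AV_nth[OF gw jv(2)] by (simp add: loc_def)
    next
      case (Gt f args)
      have "RHO j (AVb C b ! k) = RHO j (AVb C b' ! k)" if k: "k \<in> set args" for k
      proof -
        have "semL C b (LW j k r) = semL C b' (LW j k r)" for r
          using e[of "LW j k r"] LI Gt as k by (auto simp: detsL_def)
        moreover have "(AVb C b ! k, AVb C b ! k) \<in> lcs ar F j" by (rule is_cong_refl[OF lcs_cong])
        ultimately have "(AVb C b' ! k, AVb C b ! k) \<in> lcs ar F j" by (simp add: semL_def)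
        then show ?thesis using rho2[OF jv(1)] by metis
      qed
      then show ?thesis using Gt by (simp add: loc_def)
    qed
    then show ?thesis using LI by (simp add: semL_def)
  next
    case LOut
    have "semL C b (LW K (length C - 1) r) = semL C b' (LW K (length C - 1) r)" for r
      using e[of "LW K (length C - 1) r"] LOut as by (simp add: detsL_def)
    from this[of "AVb C b ! (length C - 1)"] have "AVb C b' ! (length C - 1) = AVb C b ! (length C - 1)"
      by (simp add: semL_def lcsK)
    then show ?thesis using LOut by (simp add: semL_def)
  qed (use d in \<open>auto simp: isdet_def\<close>)
qed

end


context construct begin

lemma argsL_det: "isdet l \<Longrightarrow> argsL C l = detsL C l"
  by (cases l) (auto simp: isdet_def argsL_def)

lemma nodeOf_det: "isdet l \<Longrightarrow> nodeOf n C l = MGate (Tset n C l) (wl (map (pos n C) (detsL C l)))"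
  by (cases l) (auto simp: isdet_def nodeOf_def)

lemma len_Circ: "length (Circ n C) = length (labs n C)" by (simp add: Circ_def)

definition mvals :: "nat \<Rightarrow> ('f, 'a) cnode list \<Rightarrow> bool list \<Rightarrow> bool list" where
  "mvals n C b = foldl (mstep m b) [] (Circ n C)"

lemma mvals_basic:
  "length (mvals n C b) = length (labs n C) \<and> (\<forall>j<length (labs n C). mvals n C b ! j =
     (case Circ n C ! j of MIn i \<Rightarrow> b ! i
       | MGate T args \<Rightarrow> (sum_list (map (\<lambda>k. if take j (mvals n C b) ! k then 1 else 0) args) mod m) \<in> T))"
  unfolding mvals_def using foldl_app[where f="mstep m b" and C="Circ n C" and \<phi>="\<lambda>vals nd. case nd of MIn i \<Rightarrow> b ! i
       | MGate T args \<Rightarrow> (sum_list (map (\<lambda>k. if vals ! k then 1 else 0) args) mod m) \<in> T"]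
  by (simp add: mstep_def len_Circ)

lemma sem_main:
  assumes wf: "wf_circ ar n C" and b: "length b = n"
  shows "j < length (labs n C) \<Longrightarrow> mvals n C b ! j = semL C b (labs n C ! j)"
proof (induction j rule: less_induct)
  case (less j)
  define l where "l = labs n C ! j"
  have lin: "l \<in> set (labs n C)" using less.prems by (simp add: l_def)
  have IH': "take j (mvals n C b) ! pos n C l' = semL C b l'" if l': "l' \<in> set (argsL C l)" for l'
  proof -
    have a: "l' \<in> set (labs n C)" "rank l' < rank l" using args_ok[OF wf lin l'] by auto
    have pj: "pos n C l' < j" using pos_lt[OF less.prems a(1)] a(2) by (simp add: l_def)
    have "mvals n C b ! pos n C l' = semL C b (labs n C ! pos n C l')"
      using less.IH[OF pj] pj less.prems by simp
    then show ?thesis using pj pos_ok[OF a(1)] by simp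
  qed
  have mv: "mvals n C b ! j = (case nodeOf n C l of MIn i \<Rightarrow> b ! i
       | MGate T args \<Rightarrow> (sum_list (map (\<lambda>k. if take j (mvals n C b) ! k then 1 else 0) args) mod m) \<in> T)"
    using mvals_basic less.prems by (simp add: Circ_def l_def)
  show ?case
  proof (cases "isdet l")
    case True
    define ds where "ds = detsL C l"
    have "sum_list (map (\<lambda>k. if take j (mvals n C b) ! k then 1 else 0) (wl (map (pos n C) ds)))
        = enc (map (\<lambda>k. take j (mvals n C b) ! k) (map (pos n C) ds))" by (rule sum_wl)
    also have "map (\<lambda>k. take j (mvals n C b) ! k) (map (pos n C) ds) = map (semL C b) ds"
      using IH' argsL_det[OF True] by (simp add: ds_def)
    finally have s: "sum_list (map (\<lambda>k. if take j (mvals n C b) ! k then 1 else 0) (wl (map (pos n C) ds)))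
        = enc (map (semL C b) ds)" .
    have "enc (map (semL C b) ds) < 2 ^ length ds" using enc_lt[of "map (semL C b) ds"] by simp
    also have "\<dots> \<le> 2 ^ kmax" using det_len[OF wf lin True] by (simp add: ds_def)
    finally have lt: "enc (map (semL C b) ds) < m" using kbound by simp
    have T: "enc (map (semL C b) ds) \<in> Tset n C l \<longleftrightarrow> semL C b l"
    proof
      assume "enc (map (semL C b) ds) \<in> Tset n C l"
      then obtain b' where b': "length b' = n" "semL C b' l" "enc (map (semL C b') ds) = enc (map (semL C b) ds)"
        unfolding Tset_def ds_def by auto
      then have "map (semL C b') ds = map (semL C b) ds" by (intro enc_inj) simp_all
      then have "semL C b' l = semL C b l" using determ[OF wf lin True b'(1) b] by (simp add: ds_def)
      then show "semL C b l" using b' by simp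
    qed (use b in \<open>auto simp: Tset_def ds_def\<close>)
    show ?thesis using mv nodeOf_det[OF True] s lt T by (simp add: l_def[symmetric] ds_def)
  next
    case False
    show ?thesis
    proof (cases l)
      case (LIn i)
      then show ?thesis using mv by (simp add: l_def[symmetric] nodeOf_def semL_def)
    next
      case (LC j' v a c)
      have j': "j' < K" using lin LC by (auto simp: in_labs in_labs0)
      have "map (\<lambda>k. if take j (mvals n C b) ! k then 1 else 0) (map (pos n C) (argsL C l))
          = map (\<lambda>w. if semL C b (LI j' v w a) then 1 else (0::nat)) [0..<length C]"
        using IH' LC by (simp add: argsL_def)
      then have "sum_list (map (\<lambda>k. if take j (mvals n C b) ! k then 1 else 0) (map (pos n C) (argsL C l)))
          = card {w. w < length C \<and> GG j' C v w (loc (RHO j') C (AVb C b) w) = a}"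
        by (simp add: sum_list_ind semL_def)
      then show ?thesis using mv LC mod_mod_cancel[OF mdvd[OF j']]
        by (simp add: l_def[symmetric] nodeOf_def semL_def)
    qed (use False in \<open>auto simp: isdet_def\<close>)
  qed
qed

lemma last_labs: "labs n C ! (length (labs n C) - 1) = LOut"
  by (simp add: labs_def nth_append)

lemma Circ_output:
  assumes wf: "wf_circ ar n C" and b: "length b = n"
  shows "meval m b (Circ n C) \<longleftrightarrow> AVb C b ! (length C - 1) \<in> S"
proof -
  have ne: "labs n C \<noteq> []" by (simp add: labs_def)
  have "meval m b (Circ n C) = mvals n C b ! (length (labs n C) - 1)"
  proof -
    have L: "length (mvals n C b) = length (labs n C)" using mvals_basic[of n C b] by simp
    then have "mvals n C b \<noteq> []" using ne by auto
    then show ?thesis unfolding meval_def mvals_def[symmetric] using L by (simp add: last_conv_nth)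
  qed
  also have "\<dots> = semL C b LOut"
    using sem_main[OF wf b, of "length (labs n C) - 1"] ne last_labs by simp
  finally show ?thesis by (simp add: semL_def)
qed

lemma Circ_wf:
  assumes wf: "wf_circ ar n C"
  shows "wf_mcirc n (Circ n C)"
  unfolding wf_mcirc_def
proof (intro conjI allI impI)
  show "Circ n C \<noteq> []" by (simp add: Circ_def labs_def)
  fix j assume j: "j < length (Circ n C)"
  define l where "l = labs n C ! j"
  have jl: "j < length (labs n C)" using j by (simp add: len_Circ)
  have lin: "l \<in> set (labs n C)" using jl by (simp add: l_def)
  have C: "Circ n C ! j = nodeOf n C l" using jl by (simp add: Circ_def l_def)
  have arg: "pos n C l' < j" if "l' \<in> set (argsL C l)" for l'
    using args_ok[OF wf lin that] pos_lt[OF jl] by (simp add: l_def)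
  show "case Circ n C ! j of MIn i \<Rightarrow> i < n | MGate T args \<Rightarrow> \<forall>k\<in>set args. k < j"
  proof (cases "isdet l")
    case True
    then show ?thesis using C arg argsL_det[OF True] by (auto simp: nodeOf_det set_wl)
  next
    case False
    then show ?thesis
    proof (cases l)
      case (LIn i)
      then show ?thesis using C lin by (simp add: nodeOf_def in_labs in_labs0)
    next
      case (LC j' v a c)
      then show ?thesis using C arg by (auto simp: nodeOf_def)
    qed (auto simp: isdet_def)
  qed
qed

definition dvals :: "nat \<Rightarrow> ('f, 'a) cnode list \<Rightarrow> nat list" where
  "dvals n C = foldl dstep [] (Circ n C)"

lemma dvals_basic:
  "length (dvals n C) = length (labs n C) \<and> (\<forall>j<length (labs n C). dvals n C ! j =
     (case Circ n C ! j of MIn i \<Rightarrow> 0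
       | MGate T args \<Rightarrow> Suc (fold max (map (\<lambda>k. take j (dvals n C) ! k) args) 0)))"
  unfolding dvals_def using foldl_app[where f="dstep" and C="Circ n C" and \<phi>="\<lambda>ds nd. case nd of MIn i \<Rightarrow> 0
        | MGate T args \<Rightarrow> Suc (fold max (map (\<lambda>k. ds ! k) args) 0)"]
  by (simp add: dstep_def len_Circ)

lemma depth_rank:
  assumes wf: "wf_circ ar n C"
  shows "j < length (labs n C) \<Longrightarrow> dvals n C ! j \<le> rank (labs n C ! j)"
proof (induction j rule: less_induct)
  case (less j)
  define l where "l = labs n C ! j"
  have lin: "l \<in> set (labs n C)" using less.prems by (simp add: l_def)
  have IH': "take j (dvals n C) ! pos n C l' < rank l" if l': "l' \<in> set (argsL C l)" for l'
  proof -
    have a: "l' \<in> set (labs n C)" "rank l' < rank l" using args_ok[OF wf lin l'] by auto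
    have pj: "pos n C l' < j" using pos_lt[OF less.prems a(1)] a(2) by (simp add: l_def)
    have "dvals n C ! pos n C l' \<le> rank (labs n C ! pos n C l')"
      using less.IH[OF pj] pj less.prems by simp
    then show ?thesis using pj pos_ok[OF a(1)] a(2) by simp
  qed
  have dv: "dvals n C ! j = (case nodeOf n C l of MIn i \<Rightarrow> 0
       | MGate T args \<Rightarrow> Suc (fold max (map (\<lambda>k. take j (dvals n C) ! k) args) 0))"
    using dvals_basic less.prems by (simp add: Circ_def l_def)
  have r1: "isdet l \<or> (\<exists>j' v a c. l = LC j' v a c) \<Longrightarrow> rank l \<ge> 1"
    by (cases l) (auto simp: rank_def isdet_def)
  have fm: "fold max (map (\<lambda>k. take j (dvals n C) ! k) (map (pos n C) ls)) 0 \<le> rank l - 1"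
    if ls: "set ls \<subseteq> set (argsL C l)" for ls
  proof (rule fold_max_le)
    show "\<forall>x\<in>set (map (\<lambda>k. take j (dvals n C) ! k) (map (pos n C) ls)). x \<le> rank l - 1"
    proof
      fix x assume "x \<in> set (map (\<lambda>k. take j (dvals n C) ! k) (map (pos n C) ls))"
      then obtain l' where l': "l' \<in> set ls" "x = take j (dvals n C) ! pos n C l'" by auto
      then have "l' \<in> set (argsL C l)" using ls by blast
      from IH'[OF this] l'(2) show "x \<le> rank l - 1" by simp
    qed
  qed simp
  show ?case
  proof (cases "isdet l")
    case True
    have "fold max (map (\<lambda>k. take j (dvals n C) ! k) (wl (map (pos n C) (detsL C l)))) 0 \<le> rank l - 1"
    proof (rule fold_max_le)
      show "\<forall>x\<in>set (map (\<lambda>k. take j (dvals n C) ! k) (wl (map (pos n C) (detsL C l)))). x \<le> rank l - 1"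
      proof
        fix x assume "x \<in> set (map (\<lambda>k. take j (dvals n C) ! k) (wl (map (pos n C) (detsL C l))))"
        then obtain l' where l': "l' \<in> set (detsL C l)" "x = take j (dvals n C) ! pos n C l'"
          by (auto simp: set_wl)
        then have "l' \<in> set (argsL C l)" using argsL_det[OF True] by simp
        from IH'[OF this] l'(2) show "x \<le> rank l - 1" by simp
      qed
    qed simp
    then show ?thesis using dv nodeOf_det[OF True] r1 True by (simp add: l_def[symmetric])
  next
    case False
    show ?thesis
    proof (cases l)
      case (LIn i)
      then show ?thesis using dv by (simp add: l_def[symmetric] nodeOf_def)
    next
      case (LC j' v a c)
      then show ?thesis using dv r1 fm[of "argsL C l"] by (simp add: l_def[symmetric] nodeOf_def)
    qed (use False in \<open>auto simp: isdet_def\<close>)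
  qed
qed

lemma Circ_depth:
  assumes wf: "wf_circ ar n C"
  shows "mdepth (Circ n C) \<le> 3 * K + 2"
proof -
  have ne: "labs n C \<noteq> []" by (simp add: labs_def)
  have "mdepth (Circ n C) = dvals n C ! (length (labs n C) - 1)"
  proof -
    have L: "length (dvals n C) = length (labs n C)" using dvals_basic[of n C] by simp
    then have "dvals n C \<noteq> []" using ne by auto
    then show ?thesis unfolding mdepth_def dvals_def[symmetric] using L by (simp add: last_conv_nth)
  qed
  also have "\<dots> \<le> rank LOut"
    using depth_rank[OF wf, of "length (labs n C) - 1"] ne last_labs by simp
  finally show ?thesis by (simp add: rank_def)
qed

end


lemma len_concat_le0: "(\<And>x. x \<in> set xs \<Longrightarrow> length (f x) \<le> B) \<Longrightarrow> length (concat (map f xs)) \<le> length xs * B"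
  by (induction xs) (auto simp: add_mono)

lemma len_concat_le: "(\<And>x. x \<in> set xs \<Longrightarrow> length (f x) \<le> B) \<Longrightarrow> length xs \<le> L \<Longrightarrow> length (concat (map f xs)) \<le> L * B"
proof -
  assume a: "\<And>x. x \<in> set xs \<Longrightarrow> length (f x) \<le> B" and b: "length xs \<le> L"
  have "length (concat (map f xs)) \<le> length xs * B" by (rule len_concat_le0[OF a])
  also have "\<dots> \<le> L * B" using b by (rule mult_le_mono1)
  finally show ?thesis .
qed

context construct begin

lemma MM_le_m: "j < K \<Longrightarrow> MM j \<le> m"
proof -
  have "0 < (2::nat) ^ kmax" by simp
  then have "0 < m" using kbound by linarith
  then show "j < K \<Longrightarrow> MM j \<le> m" using mdvd[of j] by (intro dvd_imp_le) auto
qed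

lemma labs0_len:
  "length (labs0 n C) \<le> n + 3 * ((K+1) * ((length C + 1) * ((length C + 1) * ((length as + 1) * (m + 1)))))"
proof -
  define N where "N = length C"
  define p where "p = length as"
  define Z where "Z = (K+1) * ((N + 1) * ((N + 1) * ((p + 1) * (m + 1))))"
  have a: "p \<le> (p + 1) * (m + 1)" "m \<le> (p + 1) * (m + 1)" by simp_all
  have 1: "length (concat (map (\<lambda>j. concat (map (\<lambda>v. map (LW j v) as) [0..<length C])) [0..<Suc K])) \<le> Suc K * (N * p)"
    by (intro len_concat_le) (auto simp: N_def p_def)
  have 2: "length (concat (map (\<lambda>j. concat (map (\<lambda>v. concat (map (\<lambda>w. map (LI j v w) as) [0..<length C])) [0..<length C])) [0..<K])) \<le> K * (N * (N * p))"
    by (intro len_concat_le) (auto simp: N_def p_def)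
  have 3: "length (concat (map (\<lambda>j. concat (map (\<lambda>v. concat (map (\<lambda>a. map (LC j v a) [0..<MM j]) as)) [0..<length C])) [0..<K])) \<le> K * (N * (p * m))"
  proof (rule len_concat_le)
    show "length [0..<K] \<le> K" by simp
    fix j assume "j \<in> set [0..<K]"
    then have j: "j < K" by simp
    show "length (concat (map (\<lambda>v. concat (map (\<lambda>a. map (LC j v a) [0..<MM j]) as)) [0..<length C])) \<le> N * (p * m)"
      by (intro len_concat_le) (auto simp: N_def p_def MM_le_m[OF j])
  qed
  have b1: "Suc K * (N * p) \<le> Z" unfolding Z_def
  proof (rule mult_le_mono)
    have "N * p \<le> (N + 1) * ((N + 1) * ((p + 1) * (m + 1)))"
    proof (rule mult_le_mono)
      have "p \<le> (p + 1) * (m + 1)" by simp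
      also have "\<dots> \<le> (N + 1) * ((p + 1) * (m + 1))" by simp
      finally show "p \<le> (N + 1) * ((p + 1) * (m + 1))" .
    qed simp
    then show "N * p \<le> (N + 1) * ((N + 1) * ((p + 1) * (m + 1)))" .
  qed simp
  have b2: "K * (N * (N * p)) \<le> Z" unfolding Z_def
    by (intro mult_le_mono) (auto intro: order.trans[OF a(1)])
  have b3: "K * (N * (p * m)) \<le> Z" unfolding Z_def
  proof (rule mult_le_mono)
    have "N * (p * m) \<le> (N + 1) * ((N + 1) * ((p + 1) * (m + 1)))"
    proof (rule mult_le_mono)
      have "p * m \<le> (p + 1) * (m + 1)" by (intro mult_le_mono) auto
      also have "\<dots> \<le> (N + 1) * ((p + 1) * (m + 1))" by simp
      finally show "p * m \<le> (N + 1) * ((p + 1) * (m + 1))" .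
    qed simp
    then show "N * (p * m) \<le> (N + 1) * ((N + 1) * ((p + 1) * (m + 1)))" .
  qed simp
  have "length (labs0 n C) \<le> n + Suc K * (N * p) + K * (N * (N * p)) + K * (N * (p * m))"
    unfolding labs0_def using 1 2 3 by simp
  also have "\<dots> \<le> n + 3 * Z" using b1 b2 b3 by simp
  finally show ?thesis by (simp add: Z_def N_def p_def)
qed

lemma Circ_size:
  assumes wf: "wf_circ ar n C"
  shows "msize (Circ n C) \<le> (n + 3 * ((K+1) * ((length C + 1) * ((length C + 1) * ((length as + 1) * (m + 1))))) + 1) * (1 + m + length C)"
proof -
  have fan: "mfanin (nodeOf n C l) \<le> m + length C" if l: "l \<in> set (labs n C)" for l
  proof (cases "isdet l")
    case True
    have "length (wl (map (pos n C) (detsL C l))) + 1 = 2 ^ length (detsL C l)"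
      using length_wl[of "map (pos n C) (detsL C l)"] by simp
    also have "\<dots> \<le> 2 ^ kmax" using det_len[OF wf l True] by simp
    finally show ?thesis using kbound nodeOf_det[OF True] by simp
  next
    case False
    then show ?thesis by (cases l) (auto simp: isdet_def nodeOf_def argsL_def)
  qed
  have "sum_list (map mfanin (Circ n C)) = sum_list (map (\<lambda>l. mfanin (nodeOf n C l)) (labs n C))"
    by (simp add: Circ_def comp_def)
  also have "\<dots> \<le> length (labs n C) * (m + length C)" by (rule sum_list_le) (use fan in auto)
  finally have s: "sum_list (map mfanin (Circ n C)) \<le> length (labs n C) * (m + length C)" .
  have "msize (Circ n C) \<le> length (labs n C) * (1 + m + length C)"
    unfolding msize_def using s by (simp add: len_Circ algebra_simps)
  also have "\<dots> \<le> (n + 3 * ((K+1) * ((length C + 1) * ((length C + 1) * ((length as + 1) * (m + 1))))) + 1) * (1 + m + length C)"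
    by (rule mult_le_mono1) (use labs0_len[of n C] in \<open>simp add: labs_def\<close>)
  finally show ?thesis .
qed

end


lemma size_arith:
  fixes n N K p m c0 k0 :: nat
  assumes n: "n \<ge> 1" and N: "N \<le> c0 * n ^ k0"
  shows "(n + 3 * ((K+1) * ((N + 1) * ((N + 1) * ((p + 1) * (m + 1))))) + 1) * (1 + m + N)
     \<le> ((1 + 3 * ((K+1) * ((p+1) * (m+1)))) * (m + 1) * (c0 + 2) ^ 3) * n ^ (3 * (k0 + 1))"
proof -
  define X where "X = n + N + 1"
  define Y where "Y = n ^ (k0 + 1)"
  define Q where "Q = (p + 1) * (m + 1)"
  define W0 where "W0 = 1 + 3 * ((K+1) * Q)"
  have X1: "1 \<le> X" by (simp add: X_def)
  have XX: "X \<le> X * X" using X1 by simp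
  have a: "(N + 1) * ((N + 1) * Q) \<le> X * (X * Q)"
    by (intro mult_le_mono) (auto simp: X_def)
  have b: "(K+1) * ((N + 1) * ((N + 1) * Q)) \<le> (K+1) * (X * (X * Q))" using a by (rule mult_le_mono2)
  have c: "n + 1 \<le> X * X" using XX by (simp add: X_def)
  have "n + 3 * ((K+1) * ((N + 1) * ((N + 1) * Q))) + 1 \<le> X * X + 3 * ((K+1) * (X * (X * Q)))"
    using b c by linarith
  also have "\<dots> = W0 * (X * X)" by (simp add: W0_def algebra_simps)
  finally have t1: "n + 3 * ((K+1) * ((N + 1) * ((N + 1) * Q))) + 1 \<le> W0 * (X * X)" .
  have "m \<le> m * X" using X1 by simp
  then have t2: "1 + m + N \<le> (m + 1) * X" by (simp add: X_def algebra_simps)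
  have "(n + 3 * ((K+1) * ((N + 1) * ((N + 1) * Q))) + 1) * (1 + m + N) \<le> (W0 * (X * X)) * ((m + 1) * X)"
    by (rule mult_le_mono[OF t1 t2])
  also have "\<dots> = W0 * (m + 1) * X ^ 3" by (simp add: power3_eq_cube algebra_simps)
  also have "X \<le> (c0 + 2) * Y"
  proof -
    have ny: "n \<le> Y" unfolding Y_def using n
      by (metis One_nat_def le_add2 power_increasing power_one_right)
    have "1 \<le> Y" unfolding Y_def using n by simp
    have "n ^ k0 \<le> Y" unfolding Y_def using n by (intro power_increasing) auto
    then have "N \<le> c0 * Y" using N order.trans mult_le_mono2 by blast
    then show ?thesis using ny \<open>1 \<le> Y\<close> by (simp add: X_def algebra_simps)
  qed
  then have "X ^ 3 \<le> ((c0 + 2) * Y) ^ 3" by (rule power_mono) simp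
  then have "W0 * (m + 1) * X ^ 3 \<le> W0 * (m + 1) * ((c0 + 2) * Y) ^ 3" by simp
  also have "\<dots> = (W0 * (m + 1) * (c0 + 2) ^ 3) * Y ^ 3"
    by (simp only: power_mult_distrib mult.assoc)
  also have "Y ^ 3 = n ^ (3 * (k0 + 1))"
  proof -
    have "Y ^ 3 = n ^ ((k0 + 1) * 3)" unfolding Y_def by (rule power_mult[symmetric])
    then show ?thesis by (simp add: mult.commute)
  qed
  finally show ?thesis by (simp add: W0_def Q_def)
qed

theorem mainTheorem13:
  fixes ar :: "'f::finite \<Rightarrow> nat" and F :: "'f \<Rightarrow> 'a::finite list \<Rightarrow> 'a"
  assumes "has_malcev ar F" and "nilpotent ar F"
  shows "nuP ar F \<subseteq> CC0"
proof
  fix L assume L: "L \<in> nuP ar F"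
  from assms(1) obtain d where dclo: "d \<in> clo ar F" and mal: "\<And>x y. d (tup3 x y y) = x" "\<And>x y. d (tup3 y y x) = x"
    unfolding has_malcev_def by blast
  from assms(2) obtain K where lcsK: "lcs ar F K = Id" unfolding nilpotent_def by blast
  define P where "P j \<rho> M \<longleftrightarrow> M > 0 \<and> (\<forall>x. (x, \<rho> x) \<in> lcs ar F j) \<and> (\<forall>x y. (x, y) \<in> lcs ar F j \<longrightarrow> \<rho> x = \<rho> y) \<and>
    (\<forall>C. gwf ar C \<longrightarrow> (\<exists>g. \<forall>vs vs'. isval F C vs \<longrightarrow> isval F C vs' \<longrightarrow> (\<forall>v<length C. (vs ! v, vs' ! v) \<in> lcs ar F j \<longrightarrow>
     (\<forall>a::'a. card {w. w < length C \<and> g v w (loc \<rho> C vs w) = a} mod M =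
          card {w. w < length C \<and> g v w (loc \<rho> C vs' w) = a} mod M) \<longrightarrow>
     (vs ! v, vs' ! v) \<in> lcs ar F (Suc j))))" for j \<rho> M
  have "\<forall>j\<in>{..<K}. \<exists>\<rho>M. P j (fst \<rho>M) (snd \<rho>M)"
  proof
    fix j
    have "\<exists>\<rho> M. P j \<rho> M" unfolding P_def
      by (rule level_exists[OF dclo mal lcs_cong lcs_cong lcs_sub lcs_cent])
    then show "\<exists>\<rho>M. P j (fst \<rho>M) (snd \<rho>M)" by auto
  qed
  from bchoice[OF this] obtain RM where RM: "\<forall>j\<in>{..<K}. P j (fst (RM j)) (snd (RM j))" by blast
  define RHO where "RHO j = fst (RM j)" for j
  define MM where "MM j = snd (RM j)" for j
  have PJ: "j < K \<Longrightarrow> P j (RHO j) (MM j)" for j using RM by (simp add: RHO_def MM_def)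
  define Q where "Q j C g \<longleftrightarrow> (\<forall>vs vs'. isval F C vs \<longrightarrow> isval F C vs' \<longrightarrow> (\<forall>v<length C. (vs ! v, vs' ! v) \<in> lcs ar F j \<longrightarrow>
     (\<forall>a::'a. card {w. w < length C \<and> g v w (loc (RHO j) C vs w) = a} mod MM j =
          card {w. w < length C \<and> g v w (loc (RHO j) C vs' w) = a} mod MM j) \<longrightarrow>
     (vs ! v, vs' ! v) \<in> lcs ar F (Suc j)))" for j C g
  define GG where "GG j C = (SOME g. Q j C g)" for j C
  have GGQ: "Q j C (GG j C)" if j: "j < K" and gw: "gwf ar C" for j C
  proof -
    have "\<exists>g. Q j C g" using PJ[OF j] gw unfolding P_def Q_def by blast
    then show ?thesis unfolding GG_def by (rule someI_ex)
  qed
  obtain as :: "'a list" where as: "set as = UNIV" using finite_list[OF finite_UNIV] by blast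
  define p where "p = length as"
  define maxar where "maxar = Max (range ar)"
  have armax: "ar f \<le> maxar" for f unfolding maxar_def by (rule Max_ge) auto
  define Mall where "Mall = (\<Prod>j<K. MM j)"
  have MMpos: "j < K \<Longrightarrow> MM j > 0" for j using PJ by (simp add: P_def)
  have Mall_pos: "Mall > 0" unfolding Mall_def using MMpos by (simp add: prod_pos)
  have MMdvd: "j < K \<Longrightarrow> MM j dvd Mall" for j unfolding Mall_def by (rule dvd_prodI) auto
  have MMle: "j < K \<Longrightarrow> MM j \<le> Mall" for j using MMdvd Mall_pos by (simp add: dvd_imp_le)
  define kmax where "kmax = p * maxar + p + p * Mall + 1"
  define m where "m = 2 ^ kmax * Mall"
  have kbound: "2 ^ kmax \<le> m" unfolding m_def using Mall_pos by simp
  from L obtain t \<iota> S where wf: "\<forall>n\<ge>1. wf_circ ar n (t n)"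
    and sz: "\<exists>c k :: nat. \<forall>n\<ge>1. circ_size (t n) \<le> c * n ^ k"
    and Ldef: "L = {b. length b \<ge> 1 \<and> circ_eval F (\<lambda>i. \<iota> (b ! i)) (t (length b)) \<in> S}"
    unfolding nuP_def by blast
  from sz obtain c0 k0 :: nat where sz': "\<forall>n\<ge>1. circ_size (t n) \<le> c0 * n ^ k0" by blast
  interpret construct ar F K RHO MM GG m as kmax \<iota> S
  proof
    show "lcs ar F K = Id" by (rule lcsK)
    show "\<And>j. j < K \<Longrightarrow> 0 < MM j" by (rule MMpos)
    show "\<And>j x y. j < K \<Longrightarrow> (x, y) \<in> lcs ar F j \<Longrightarrow> RHO j x = RHO j y" using PJ by (simp add: P_def)
    show "\<And>j C vs vs' v. j < K \<Longrightarrow> gwf ar C \<Longrightarrow> isval F C vs \<Longrightarrow> isval F C vs' \<Longrightarrow> v < length C \<Longrightarrow>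
        (vs ! v, vs' ! v) \<in> lcs ar F j \<Longrightarrow>
        (\<forall>a::'a. card {w. w < length C \<and> GG j C v w (loc (RHO j) C vs w) = a} mod MM j =
             card {w. w < length C \<and> GG j C v w (loc (RHO j) C vs' w) = a} mod MM j) \<Longrightarrow>
        (vs ! v, vs' ! v) \<in> lcs ar F (Suc j)"
      using GGQ unfolding Q_def by blast
    show "set as = UNIV" by (rule as)
    show "\<And>j. j < K \<Longrightarrow> MM j dvd m" unfolding m_def using MMdvd by simp
    show "2 ^ kmax \<le> m" by (rule kbound)
    show "length as * ar f \<le> kmax" for f
    proof -
      have "p * ar f \<le> p * maxar" using armax[of f] by (rule mult_le_mono2)
      then show ?thesis unfolding kmax_def p_def[symmetric] by linarith
    qed
    show "length as + length as * MM j \<le> kmax" if "j < K" for j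
    proof -
      have "p * MM j \<le> p * Mall" using MMle[OF that] by (rule mult_le_mono2)
      then show ?thesis unfolding kmax_def p_def[symmetric] by linarith
    qed
    show "1 \<le> kmax" by (simp add: kmax_def)
    show "length as \<le> kmax" by (simp add: kmax_def p_def)
  qed
  define CF where "CF n = (if n = 0 then [MGate {} []] else Circ n (t n))" for n
  define cc where "cc = (1 + 3 * ((K+1) * ((p+1) * (m+1)))) * (m + 1) * (c0 + 2) ^ 3"
  have cc1: "cc \<ge> 1" by (simp add: cc_def)
  have F1: "2 \<le> m"
  proof -
    have "(2::nat) ^ 1 \<le> 2 ^ kmax" by (rule power_increasing) (simp_all add: kmax_def)
    then show ?thesis using kbound by simp
  qed
  have F2: "wf_mcirc n (CF n) \<and> mdepth (CF n) \<le> 3 * K + 2 \<and> msize (CF n) \<le> cc * n ^ (3 * (k0 + 1)) + cc" for n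
  proof (intro conjI)
    show "wf_mcirc n (CF n)"
    proof (cases "n = 0")
      case True then show ?thesis by (simp add: CF_def wf_mcirc_def)
    next
      case False then show ?thesis using Circ_wf wf by (simp add: CF_def)
    qed
    show "mdepth (CF n) \<le> 3 * K + 2"
    proof (cases "n = 0")
      case True then show ?thesis by (simp add: CF_def mdepth_def dstep_def)
    next
      case False then show ?thesis using Circ_depth wf by (simp add: CF_def)
    qed
    show "msize (CF n) \<le> cc * n ^ (3 * (k0 + 1)) + cc"
    proof (cases "n = 0")
      case True then show ?thesis using cc1 by (simp add: CF_def msize_def)
    next
      case False
      then have n1: "n \<ge> 1" by simp
      have wfn: "wf_circ ar n (t n)" using wf n1 by blast
      have Nb: "length (t n) \<le> c0 * n ^ k0"
        using sz' n1 unfolding circ_size_def by (meson le_add1 order.trans)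
      have "msize (CF n) \<le> (n + 3 * ((K+1) * ((length (t n) + 1) * ((length (t n) + 1) * ((length as + 1) * (m + 1))))) + 1) * (1 + m + length (t n))"
        using Circ_size[OF wfn] False by (simp add: CF_def)
      also have "\<dots> \<le> cc * n ^ (3 * (k0 + 1))"
        unfolding cc_def p_def by (rule size_arith[OF n1 Nb])
      finally show ?thesis by simp
    qed
  qed
  have F3: "b \<in> L \<longleftrightarrow> meval m b (CF (length b))" for b :: "bool list"
  proof (cases "length b = 0")
    case True
    then show ?thesis by (simp add: Ldef CF_def meval_def mstep_def)
  next
    case False
    then have n1: "length b \<ge> 1" by linarith
    have wfn: "wf_circ ar (length b) (t (length b))" using wf n1 by blast
    have ne: "t (length b) \<noteq> []" using wfn by (simp add: wf_circ_def)
    have "circ_eval F (\<lambda>i. \<iota> (b ! i)) (t (length b)) = AV F \<iota> (t (length b)) b ! (length (t (length b)) - 1)"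
    proof -
      have L1: "length (AV F \<iota> (t (length b)) b) = length (t (length b))" by (rule AV_len)
      then have "AV F \<iota> (t (length b)) b \<noteq> []" using ne by auto
      then show ?thesis unfolding circ_eval_def AV_def[symmetric] using L1 by (simp add: last_conv_nth)
    qed
    moreover have "b \<in> L \<longleftrightarrow> circ_eval F (\<lambda>i. \<iota> (b ! i)) (t (length b)) \<in> S"
      unfolding Ldef using n1 by blast
    ultimately show ?thesis using Circ_output[OF wfn refl] False by (simp add: CF_def)
  qed
  show "L \<in> CC0"
    unfolding CC0_def
    apply (rule CollectI)
    apply (rule exI[where x=m], rule exI[where x="3 * K + 2"], rule exI[where x=cc],
        rule exI[where x="3 * (k0 + 1)"], rule exI[where x=CF])
    using F1 F2 F3 by blast
qed


end
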